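(* Let $b\in C^4([0,1])$ be real-valued with $\vartheta/100\le|b'|\le 1/(100\vartheta)$ on $[0,1]$ for some $\vartheta\in(0,1/10)$. There is a constant $C>1$ such that for all $\epsilon\in[-1/4,1/4]\setminus\{0\}$, $k\in\mathbb{Z}\setminus\{0\}$, $y_0\in[0,1]$, integers $1\le m\le5$, and all $f$ with $\|f\|_{Y^{1,m}_{k,y_0,\epsilon}}<\infty$, $$\|T_{k,y_0,\epsilon}f\|_{Z^{1,m}_{k,y_0,\epsilon}}\le C|k|^{-1}[\log\langle k\rangle]^{m+2}\|f\|_{Y^{1,m}_{k,y_0,\epsilon}}.$$
   Context: $\langle k\rangle=\sqrt{1+k^2}$. $\log$ denotes the principal branch of the complex logarithm (its argument $b(y)-b(y_0)+i\epsilon$ is nonzero since $\epsilon\ne0$). For $k\in\mathbb{Z}\setminus\{0\}$, $G_k(y,z)=\frac{1}{k\sinh k}\sinh(k(1-z))\sinh(ky)$ if $y\le z$ and $=\frac{1}{k\sinh k}\sinh(kz)\sinh(k(1-y))$ if $y\ge z$ (Dirichlet Green's function of $k^2-d^2/dy^2$ on $(0,1)$). Define $T_{k,y_0,\epsilon}f(y)=\int_0^1G_k(y,z)\frac{f(z)}{b(z)-b(y_0)+i\epsilon}\,dz$. All norms are over $y\in[0,1]$. For integer $m\ge1$: $\|f\|_{Y^{1,m}_{k,y_0,\epsilon}}=\|f\|_{L^\infty}+\Big\|\frac{f'(y)/|k|}{(\log(b(y)-b(y_0)+i\epsilon)-\vartheta^{-1})^{1+m}}\Big\|_{L^\infty}$;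 $\|f\|_{Z^{1,m}_{k,y_0,\epsilon}}=\|f\|_{L^\infty}+|k|^{-1}\inf\big[\|g\|_{Y^{1,m}_{k,y_0,\epsilon}}+\|h\|_{Y^{1,m+1}_{k,y_0,\epsilon}}\big]$, the infimum over all decompositions $f'(y)=g(y)\log(b(y)-b(y_0)+i\epsilon)+h(y)$. *)

theory Defs
  imports "HOL-Analysis.Analysis"
begin

definition C4_with_bounds :: "(real \<Rightarrow> real) \<Rightarrow> real \<Rightarrow> bool" where
  "C4_with_bounds b \<theta> \<longleftrightarrow>
     (\<exists>d :: nat \<Rightarrow> real \<Rightarrow> real.
        (\<forall>y\<in>{0..1}. d 0 y = b y) \<and>
        (\<forall>j<4. \<forall>y\<in>{0..1}. (d j has_real_derivative d (Suc j) y) (at y within {0..1})) \<and>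
        continuous_on {0..1} (d 4) \<and>
        (\<forall>y\<in>{0..1}. \<theta> / 100 \<le> \<bar>d 1 y\<bar> \<and> \<bar>d 1 y\<bar> \<le> 1 / (100 * \<theta>)))"

definition jbr :: "real \<Rightarrow> real" where
  "jbr k = sqrt (1 + k\<^sup>2)"

text \<open>Dirichlet Green's function of k^2 - d^2/dy^2 on (0,1).\<close>
definition Green :: "int \<Rightarrow> real \<Rightarrow> real \<Rightarrow> real" where
  "Green k y z =
     (if y \<le> z then sinh (real_of_int k * (1 - z)) * sinh (real_of_int k * y)
                   / (real_of_int k * sinh (real_of_int k))
      else sinh (real_of_int k * z) * sinh (real_of_int k * (1 - y))
                   / (real_of_int k * sinh (real_of_int k)))"

definition den :: "(real \<Rightarrow> real) \<Rightarrow> real \<Rightarrow> real \<Rightarrow> real \<Rightarrow> complex" where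
  "den b y0 eps y = complex_of_real (b y - b y0) + \<i> * complex_of_real eps"

definition Top :: "(real \<Rightarrow> real) \<Rightarrow> int \<Rightarrow> real \<Rightarrow> real \<Rightarrow> (real \<Rightarrow> complex) \<Rightarrow> real \<Rightarrow> complex" where
  "Top b k y0 eps f y =
     integral {0..1} (\<lambda>z. complex_of_real (Green k y z) * f z / den b y0 eps z)"

definition dI :: "(real \<Rightarrow> complex) \<Rightarrow> real \<Rightarrow> complex" where
  "dI f y = vector_derivative f (at y within {0..1})"

definition diffI :: "(real \<Rightarrow> complex) \<Rightarrow> bool" where
  "diffI f \<longleftrightarrow> (\<forall>y\<in>{0..1}. f differentiable (at y within {0..1}))"

definition supnorm :: "(real \<Rightarrow> complex) \<Rightarrow> ereal" where
  "supnorm f = (SUP y\<in>{0..1}. ereal (cmod (f y)))"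

definition Ynorm :: "(real \<Rightarrow> real) \<Rightarrow> real \<Rightarrow> int \<Rightarrow> real \<Rightarrow> real \<Rightarrow> nat \<Rightarrow> (real \<Rightarrow> complex) \<Rightarrow> ereal" where
  "Ynorm b \<theta> k y0 eps m f =
     (if diffI f then
        supnorm f +
        supnorm (\<lambda>y. (dI f y / complex_of_real \<bar>real_of_int k\<bar>)
                      / (Ln (den b y0 eps y) - complex_of_real (1 / \<theta>)) ^ (1 + m))
      else \<infinity>)"

definition Znorm :: "(real \<Rightarrow> real) \<Rightarrow> real \<Rightarrow> int \<Rightarrow> real \<Rightarrow> real \<Rightarrow> nat \<Rightarrow> (real \<Rightarrow> complex) \<Rightarrow> ereal" where
  "Znorm b \<theta> k y0 eps m f =
     (if diffI f then
        supnorm f +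
        ereal (1 / \<bar>real_of_int k\<bar>) *
          (INF gh \<in> {(g, h). \<forall>y\<in>{0..1}. dI f y = g y * Ln (den b y0 eps y) + h y}.
              Ynorm b \<theta> k y0 eps m (fst gh) + Ynorm b \<theta> k y0 eps (m + 1) (snd gh))
      else \<infinity>)"

end

theory Submission
  imports Defs "HOL-Analysis.Analysis"
begin


lemma one_plus_le_exp_pow:
  fixes v :: real and p :: nat
  assumes "0 \<le> v" "1 \<le> p"
  shows "(1 + v) ^ p \<le> (2 * real p) ^ p * exp (v / 2)"
proof -
  have "1 + v / (2 * p) \<le> exp (v / (2 * p))" by (rule exp_ge_add_one_self)
  hence "1 + v \<le> 2 * real p * exp (v / (2 * p))"
    using assms by (simp add: field_simps)
  hence "(1 + v) ^ p \<le> (2 * real p * exp (v / (2 * p))) ^ p"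
    using assms by (intro power_mono) auto
  also have "\<dots> = (2 * real p) ^ p * exp (v / (2 * p)) ^ p" by (simp add: power_mult_distrib)
  also have "exp (v / (2 * p)) ^ p = exp (v / 2)"
    using assms by (simp add: exp_of_nat_mult[symmetric])
  finally show ?thesis .
qed

lemma ptwise:
  fixes K t a :: real and p :: nat
  assumes K: "1 \<le> K" and t: "0 < t" "t \<le> 2" and a: "0 \<le> a" and p: "1 \<le> p"
  shows "exp (-a) * (1 + \<bar>ln t\<bar>) ^ p
     \<le> (1 + ln K) ^ p * (2 ^ p * exp (-a) + 2 * (2 * real p) ^ p / (sqrt (K * t) * (1 + K * t)))"
proof (cases "K * t \<ge> 1")
  case True
  have lnK: "0 \<le> ln K" using K by simp
  have "ln t + ln K = ln (K * t)" using K t by (simp add: ln_mult)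
  also have "\<dots> \<ge> 0" using True by simp
  finally have h1: "ln t \<ge> - ln K" by simp
  have "ln t \<le> t - 1" using t by (intro ln_le_minus_one) 
  hence h2: "ln t \<le> 1" using t by simp
  have "\<bar>ln t\<bar> \<le> 1 + ln K" using h1 h2 lnK by (simp add: abs_le_iff)
  hence "1 + \<bar>ln t\<bar> \<le> 2 * (1 + ln K)" using lnK by (smt (verit))
  hence "(1 + \<bar>ln t\<bar>) ^ p \<le> (2 * (1 + ln K)) ^ p" by (intro power_mono) auto
  hence h3: "(1 + \<bar>ln t\<bar>) ^ p \<le> 2 ^ p * (1 + ln K) ^ p" by (metis power_mult_distrib)
  have "exp (-a) * (1 + \<bar>ln t\<bar>) ^ p \<le> exp (-a) * (2 ^ p * (1 + ln K) ^ p)"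
    using h3 by (intro mult_left_mono) auto
  also have "\<dots> = (1 + ln K) ^ p * (2 ^ p * exp (-a))" by simp
  also have "\<dots> \<le> (1 + ln K) ^ p * (2 ^ p * exp (-a) + 2 * (2 * real p) ^ p / (sqrt (K * t) * (1 + K * t)))"
    using K t lnK by (intro mult_left_mono) auto
  finally show ?thesis .
next
  case False
  define x where "x = K * t"
  have x0: "0 < x" "x < 1" using False K t by (auto simp: x_def)
  define v where "v = - ln x"
  have v0: "0 < v" using x0 by (simp add: v_def)
  have lnK: "0 \<le> ln K" using K by simp
  have "ln t = ln x - ln K" using K t by (simp add: x_def ln_mult)
  hence "1 + \<bar>ln t\<bar> = 1 + ln K + v" using lnK v0 by (simp add: v_def)
  also have "\<dots> \<le> (1 + ln K) * (1 + v)" using lnK v0 by (simp add: algebra_simps)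
  finally have "(1 + \<bar>ln t\<bar>) ^ p \<le> ((1 + ln K) * (1 + v)) ^ p" by (intro power_mono) auto
  also have "\<dots> = (1 + ln K) ^ p * (1 + v) ^ p" by (simp add: power_mult_distrib)
  also have "\<dots> \<le> (1 + ln K) ^ p * ((2 * real p) ^ p * exp (v / 2))"
    using one_plus_le_exp_pow[of v p] v0 p lnK by (intro mult_left_mono) auto
  also have "exp (v / 2) = 1 / sqrt x"
  proof -
    have "sqrt x = exp (ln x / 2)" using x0 by (simp add: powr_half_sqrt[symmetric] powr_def)
    thus ?thesis by (simp add: v_def exp_minus field_simps)
  qed
  also have "(1 + ln K) ^ p * ((2 * real p) ^ p * (1 / sqrt x)) \<le> (1 + ln K) ^ p * (2 * (2 * real p) ^ p / (sqrt x * (1 + x)))"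
  proof (intro mult_left_mono)
    have s0: "0 < sqrt x" using x0 by simp
    have c0: "0 \<le> (2 * real p) ^ p" by simp
    have "(2 * real p) ^ p * (1 / sqrt x) = (2 * real p) ^ p * (1 + x) / (sqrt x * (1 + x))"
    proof -
      have "\<And>c s q::real. s > 0 \<Longrightarrow> q > 0 \<Longrightarrow> c * (1 / s) = c * q / (s * q)" by simp
      thus ?thesis using s0 x0 by (metis add_pos_pos zero_less_one)
    qed
    also have "\<dots> \<le> (2 * (2 * real p) ^ p) / (sqrt x * (1 + x))"
    proof (intro divide_right_mono)
      have "(2 * real p) ^ p * (1 + x) \<le> (2 * real p) ^ p * 2" using c0 x0 by (intro mult_left_mono) auto
      thus "(2 * real p) ^ p * (1 + x) \<le> 2 * (2 * real p) ^ p" by simp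
    qed (use s0 x0 in auto)
    finally show "(2 * real p) ^ p * (1 / sqrt x) \<le> 2 * (2 * real p) ^ p / (sqrt x * (1 + x))" .
  qed (use lnK in auto)
  finally have h: "(1 + \<bar>ln t\<bar>) ^ p \<le> (1 + ln K) ^ p * (2 * (2 * real p) ^ p / (sqrt x * (1 + x)))" .
  have "exp (-a) * (1 + \<bar>ln t\<bar>) ^ p \<le> 1 * (1 + \<bar>ln t\<bar>) ^ p"
    using a by (intro mult_right_mono) auto
  also have "\<dots> \<le> (1 + ln K) ^ p * (2 * (2 * real p) ^ p / (sqrt x * (1 + x)))" using h by simp
  also have "\<dots> \<le> (1 + ln K) ^ p * (2 ^ p * exp (-a) + 2 * (2 * real p) ^ p / (sqrt (K * t) * (1 + K * t)))"
    using lnK by (intro mult_left_mono) (auto simp: x_def)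
  finally show ?thesis .
qed


lemma psi_cont:
  fixes K e y0 :: real
  assumes "0 < K" "0 < e"
  shows "continuous_on S (\<lambda>z. 1 / (sqrt (K * (\<bar>z - y0\<bar> + e)) * (1 + K * (\<bar>z - y0\<bar> + e))))"
proof -
  have pos: "0 < K * (\<bar>z - y0\<bar> + e)" for z using assms by (simp add: add_pos_nonneg)
  have p1: "1 + K * (\<bar>z - y0\<bar> + e) \<noteq> 0" "sqrt (K * (\<bar>z - y0\<bar> + e)) \<noteq> 0" for z
    using pos[of z] by auto
  have p2: "\<bar>z - y0\<bar> + e \<noteq> 0" "K \<noteq> 0" for z using pos[of z] by auto
  show ?thesis
    by (intro continuous_intros) (auto simp: p1 p2)
qed

lemma psi_int_right:
  fixes K e y0 :: real
  assumes K: "0 < K" and e: "0 < e" and y0: "y0 \<le> 1"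
  shows "((\<lambda>z. 1 / (sqrt (K * (\<bar>z - y0\<bar> + e)) * (1 + K * (\<bar>z - y0\<bar> + e)))) has_integral
     (2 / K * arctan (sqrt (K * (1 - y0 + e))) - 2 / K * arctan (sqrt (K * (y0 - y0 + e))))) {y0..1}"
proof -
  have d: "((\<lambda>z. 2 / K * arctan (sqrt (K * (z - y0 + e)))) has_vector_derivative
        1 / (sqrt (K * (\<bar>z - y0\<bar> + e)) * (1 + K * (\<bar>z - y0\<bar> + e)))) (at z within {y0..1})"
    if z: "z \<in> {y0..1}" for z
  proof -
    have zp: "0 < K * (z - y0 + e)" using z K e by auto
    have "((\<lambda>z. 2 / K * arctan (sqrt (K * (z - y0 + e)))) has_real_derivative
        2 / K * (inverse (1 + (sqrt (K * (z - y0 + e)))\<^sup>2) * (inverse (sqrt (K * (z - y0 + e))) / 2 * K))) (at z)"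
    proof -
      have h1: "((\<lambda>z. K * (z - y0 + e)) has_real_derivative K) (at z)"
        by (auto intro!: derivative_eq_intros)
      have h2: "((\<lambda>z. sqrt (K * (z - y0 + e))) has_real_derivative (inverse (sqrt (K * (z - y0 + e))) / 2 * K)) (at z)"
        by (rule DERIV_chain2[OF DERIV_real_sqrt[OF zp] h1])
      have h3: "((\<lambda>z. arctan (sqrt (K * (z - y0 + e)))) has_real_derivative inverse (1 + (sqrt (K * (z - y0 + e)))\<^sup>2) * (inverse (sqrt (K * (z - y0 + e))) / 2 * K)) (at z)"
        by (rule DERIV_chain2[OF DERIV_arctan h2])
      show ?thesis by (rule DERIV_cmult[OF h3])
    qed
    moreover have "2 / K * (inverse (1 + (sqrt (K * (z - y0 + e)))\<^sup>2) * (inverse (sqrt (K * (z - y0 + e))) / 2 * K))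
        = 1 / (sqrt (K * (\<bar>z - y0\<bar> + e)) * (1 + K * (\<bar>z - y0\<bar> + e)))"
    proof -
      have gen: "\<And>K s::real. K > 0 \<Longrightarrow> s > 0 \<Longrightarrow> 1 + s\<^sup>2 \<noteq> 0 \<Longrightarrow> 2 / K * (inverse (1 + s\<^sup>2) * (inverse s / 2 * K)) = 1 / (s * (1 + s\<^sup>2))"
      proof -
        fix K s :: real assume a: "K > 0" "s > 0"
        have g: "\<And>a b. 2 / K * (a * (b / 2 * K)) = a * b" using a by (simp add: field_simps)
        show "2 / K * (inverse (1 + s\<^sup>2) * (inverse s / 2 * K)) = 1 / (s * (1 + s\<^sup>2))"
          unfolding g by (simp add: inverse_eq_divide)
      qed
      have ab: "\<bar>z - y0\<bar> = z - y0" using z by auto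
      have sq: "(sqrt (K * (z - y0 + e)))\<^sup>2 = K * (z - y0 + e)" using zp by simp
      have "1 + (sqrt (K * (z - y0 + e)))\<^sup>2 \<noteq> 0" by (smt (verit) zero_le_power2)
      from gen[OF K _ this] zp show ?thesis by (simp add: ab sq)
    qed
    ultimately show ?thesis
      by (simp add: has_real_derivative_iff_has_vector_derivative has_vector_derivative_at_within)
  qed
  show ?thesis
    using fundamental_theorem_of_calculus[OF y0 d] by simp
qed

lemma psi_int_left:
  fixes K e y0 :: real
  assumes K: "0 < K" and e: "0 < e" and y0: "0 \<le> y0"
  shows "((\<lambda>z. 1 / (sqrt (K * (\<bar>z - y0\<bar> + e)) * (1 + K * (\<bar>z - y0\<bar> + e)))) has_integral
     (- 2 / K * arctan (sqrt (K * (y0 - y0 + e))) - (- 2 / K * arctan (sqrt (K * (y0 - 0 + e)))))) {0..y0}"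
proof -
  have d: "((\<lambda>z. - 2 / K * arctan (sqrt (K * (y0 - z + e)))) has_vector_derivative
        1 / (sqrt (K * (\<bar>z - y0\<bar> + e)) * (1 + K * (\<bar>z - y0\<bar> + e)))) (at z within {0..y0})"
    if z: "z \<in> {0..y0}" for z
  proof -
    have zp: "0 < K * (y0 - z + e)" using z K e by auto
    have "((\<lambda>z. - 2 / K * arctan (sqrt (K * (y0 - z + e)))) has_real_derivative
        - 2 / K * (inverse (1 + (sqrt (K * (y0 - z + e)))\<^sup>2) * (inverse (sqrt (K * (y0 - z + e))) / 2 * (- K)))) (at z)"
    proof -
      have h1: "((\<lambda>z. K * (y0 - z + e)) has_real_derivative - K) (at z)"
        by (auto intro!: derivative_eq_intros)
      have h2: "((\<lambda>z. sqrt (K * (y0 - z + e))) has_real_derivative (inverse (sqrt (K * (y0 - z + e))) / 2 * (- K))) (at z)"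
        by (rule DERIV_chain2[OF DERIV_real_sqrt[OF zp] h1])
      have h3: "((\<lambda>z. arctan (sqrt (K * (y0 - z + e)))) has_real_derivative inverse (1 + (sqrt (K * (y0 - z + e)))\<^sup>2) * (inverse (sqrt (K * (y0 - z + e))) / 2 * (- K))) (at z)"
        by (rule DERIV_chain2[OF DERIV_arctan h2])
      show ?thesis by (rule DERIV_cmult[OF h3])
    qed
    moreover have "- 2 / K * (inverse (1 + (sqrt (K * (y0 - z + e)))\<^sup>2) * (inverse (sqrt (K * (y0 - z + e))) / 2 * (- K)))
        = 1 / (sqrt (K * (\<bar>z - y0\<bar> + e)) * (1 + K * (\<bar>z - y0\<bar> + e)))"
    proof -
      have gen: "\<And>K s::real. K > 0 \<Longrightarrow> s > 0 \<Longrightarrow> - 2 / K * (inverse (1 + s\<^sup>2) * (inverse s / 2 * (- K))) = 1 / (s * (1 + s\<^sup>2))"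
      proof -
        fix K s :: real assume a: "K > 0" "s > 0"
        have g: "\<And>a b. - 2 / K * (a * (b / 2 * (- K))) = a * b" using a by (simp add: field_simps)
        show "- 2 / K * (inverse (1 + s\<^sup>2) * (inverse s / 2 * (- K))) = 1 / (s * (1 + s\<^sup>2))"
          unfolding g by (simp add: inverse_eq_divide)
      qed
      have ab: "\<bar>z - y0\<bar> = y0 - z" using z by auto
      have sq: "(sqrt (K * (y0 - z + e)))\<^sup>2 = K * (y0 - z + e)" using zp by simp
      have "- 2 / K * (inverse (1 + (sqrt (K * (y0 - z + e)))\<^sup>2) * (inverse (sqrt (K * (y0 - z + e))) / 2 * (- K)))
          = 1 / (sqrt (K * (y0 - z + e)) * (1 + (sqrt (K * (y0 - z + e)))\<^sup>2))"
        by (rule gen[OF K]) (use zp in simp)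
      also have "\<dots> = 1 / (sqrt (K * (\<bar>z - y0\<bar> + e)) * (1 + K * (\<bar>z - y0\<bar> + e)))"
        by (simp only: ab sq)
      finally show ?thesis .
    qed
    ultimately show ?thesis
      by (simp add: has_real_derivative_iff_has_vector_derivative has_vector_derivative_at_within)
  qed
  show ?thesis
    using fundamental_theorem_of_calculus[OF y0 d] by simp
qed

lemma psi_int_total:
  fixes K e y0 :: real
  assumes K: "0 < K" and e: "0 < e" and y0: "0 \<le> y0" "y0 \<le> 1"
  shows "integral {0..1} (\<lambda>z. 1 / (sqrt (K * (\<bar>z - y0\<bar> + e)) * (1 + K * (\<bar>z - y0\<bar> + e)))) \<le> 2 * pi / K"
proof -
  let ?f = "\<lambda>z. 1 / (sqrt (K * (\<bar>z - y0\<bar> + e)) * (1 + K * (\<bar>z - y0\<bar> + e)))"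
  have i: "?f integrable_on {0..1}" using psi_cont[OF K e] by (rule integrable_continuous_interval)
  have "integral {0..1} ?f = integral {0..y0} ?f + integral {y0..1} ?f"
    using Henstock_Kurzweil_Integration.integral_combine[OF y0 i] by simp
  also have "integral {0..y0} ?f = 2 / K * (arctan (sqrt (K * (y0 + e))) - arctan (sqrt (K * e)))"
    using integral_unique[OF psi_int_left[OF K e y0(1)]] by (simp add: algebra_simps)
  also have "integral {y0..1} ?f = 2 / K * (arctan (sqrt (K * (1 - y0 + e))) - arctan (sqrt (K * e)))"
    using integral_unique[OF psi_int_right[OF K e y0(2)]] by (simp add: algebra_simps)
  also have "2 / K * (arctan (sqrt (K * (y0 + e))) - arctan (sqrt (K * e))) + 2 / K * (arctan (sqrt (K * (1 - y0 + e))) - arctan (sqrt (K * e)))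
       \<le> 2 / K * (pi / 2) + 2 / K * (pi / 2)"
  proof (intro add_mono mult_left_mono)
    have "0 \<le> arctan (sqrt (K * e))" using K e by (simp add: zero_le_arctan_iff)
    thus "arctan (sqrt (K * (y0 + e))) - arctan (sqrt (K * e)) \<le> pi / 2"
         "arctan (sqrt (K * (1 - y0 + e))) - arctan (sqrt (K * e)) \<le> pi / 2"
      using arctan_ubound by (smt (verit))+
  qed (use K in auto)
  also have "\<dots> = 2 * pi / K" by (simp add: field_simps)
  finally show ?thesis .
qed

lemma exp_int_right:
  fixes K y :: real
  assumes K: "0 < K" and y: "y \<le> 1"
  shows "((\<lambda>z. exp (- K * (z - y))) has_integral (1 - exp (- K * (1 - y))) / K) {y..1}"
proof -
  have d: "((\<lambda>z. - exp (- K * (z - y)) / K) has_vector_derivative exp (- K * (z - y))) (at z within {y..1})" for z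
  proof -
    have "((\<lambda>z. - exp (- K * (z - y)) / K) has_real_derivative - (exp (- K * (z - y)) * (- K * (1 - 0))) / K) (at z)"
      by (auto intro!: derivative_eq_intros)
    thus ?thesis using K
      by (simp add: has_real_derivative_iff_has_vector_derivative has_vector_derivative_at_within)
  qed
  show ?thesis using fundamental_theorem_of_calculus[OF y d] by (simp add: diff_divide_distrib)
qed

lemma exp_int_left:
  fixes K y :: real
  assumes K: "0 < K" and y: "0 \<le> y"
  shows "((\<lambda>z. exp (- K * (y - z))) has_integral (1 - exp (- K * y)) / K) {0..y}"
proof -
  have d: "((\<lambda>z. exp (- K * (y - z)) / K) has_vector_derivative exp (- K * (y - z))) (at z within {0..y})" for z
  proof -
    have "((\<lambda>z. exp (- K * (y - z)) / K) has_real_derivative (exp (- K * (y - z)) * (- K * (0 - 1))) / K) (at z)"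
      by (auto intro!: derivative_eq_intros)
    thus ?thesis using K
      by (simp add: has_real_derivative_iff_has_vector_derivative has_vector_derivative_at_within)
  qed
  show ?thesis using fundamental_theorem_of_calculus[OF y d] by (simp add: diff_divide_distrib)
qed

lemma key_integral:
  fixes K e y y0 A :: real and p :: nat and N :: "real \<Rightarrow> real"
  assumes K: "1 \<le> K" and e: "0 < e" "e \<le> 1/2" and y: "0 \<le> y" "y \<le> 1"
    and y0: "0 \<le> y0" "y0 \<le> 1" and p: "1 \<le> p" and A: "0 \<le> A"
    and N: "continuous_on {0..1} N"
    and Nb: "\<And>z. z \<in> {0..1} \<Longrightarrow> N z \<le> A * (1 + \<bar>ln (\<bar>z - y0\<bar> + e)\<bar>) ^ p"
  shows "K * (integral {y..1} (\<lambda>z. exp (- K * (z - y)) * N z) + integral {0..y} (\<lambda>z. exp (- K * (y - z)) * N z))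
     \<le> A * (1 + ln K) ^ p * (2 ^ (p + 1) + 4 * pi * (2 * real p) ^ p)"
proof -
  define \<Lambda> where "\<Lambda> = (1 + ln K) ^ p"
  define c where "c = 2 * (2 * real p) ^ p"
  define \<psi> where "\<psi> = (\<lambda>z. 1 / (sqrt (K * (\<bar>z - y0\<bar> + e)) * (1 + K * (\<bar>z - y0\<bar> + e))))"
  have K0: "0 < K" using K by simp
  have \<Lambda>0: "0 \<le> \<Lambda>" using K by (simp add: \<Lambda>_def)
  have pt: "exp (- a) * N z \<le> A * \<Lambda> * (2 ^ p * exp (- a) + c * \<psi> z)" if z: "z \<in> {0..1}" and a: "0 \<le> a" for z a
  proof -
    have t: "0 < \<bar>z - y0\<bar> + e" "\<bar>z - y0\<bar> + e \<le> 2" using z y0 e by auto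
    have "exp (- a) * N z \<le> exp (- a) * (A * (1 + \<bar>ln (\<bar>z - y0\<bar> + e)\<bar>) ^ p)"
      using Nb[OF z] by (intro mult_left_mono) auto
    also have "\<dots> = A * (exp (- a) * (1 + \<bar>ln (\<bar>z - y0\<bar> + e)\<bar>) ^ p)" by simp
    also have "\<dots> \<le> A * (\<Lambda> * (2 ^ p * exp (- a) + 2 * (2 * real p) ^ p / (sqrt (K * (\<bar>z - y0\<bar> + e)) * (1 + K * (\<bar>z - y0\<bar> + e)))))"
      unfolding \<Lambda>_def using ptwise[OF K t a p] A by (intro mult_left_mono) auto
    also have "\<dots> = A * \<Lambda> * (2 ^ p * exp (- a) + c * \<psi> z)" by (simp add: c_def \<psi>_def)
    finally show ?thesis .
  qed
  have c\<psi>: "continuous_on S \<psi>" for S unfolding \<psi>_def using psi_cont[OF K0 e(1)] .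
  have i\<psi>: "\<psi> integrable_on {a..b}" for a b by (rule integrable_continuous_interval[OF c\<psi>])
  have cN: "continuous_on {a..b} N" if "0 \<le> a" "b \<le> 1" for a b
    using continuous_on_subset[OF N] that by auto
  have iNR: "(\<lambda>z. exp (- K * (z - y)) * N z) integrable_on {y..1}"
    using y by (intro integrable_continuous_interval continuous_intros cN) auto
  have iNL: "(\<lambda>z. exp (- K * (y - z)) * N z) integrable_on {0..y}"
    using y by (intro integrable_continuous_interval continuous_intros cN) auto
  define ER where "ER = (1 - exp (- K * (1 - y))) / K"
  define EL where "EL = (1 - exp (- K * y)) / K"
  have hR: "((\<lambda>z. A * \<Lambda> * (2 ^ p * exp (- K * (z - y)) + c * \<psi> z)) has_integral
      A * \<Lambda> * (2 ^ p * ER + c * integral {y..1} \<psi>)) {y..1}"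
    unfolding ER_def
    by (intro has_integral_mult_right has_integral_add exp_int_right K0 y integrable_integral i\<psi>)
  have hL: "((\<lambda>z. A * \<Lambda> * (2 ^ p * exp (- K * (y - z)) + c * \<psi> z)) has_integral
      A * \<Lambda> * (2 ^ p * EL + c * integral {0..y} \<psi>)) {0..y}"
    unfolding EL_def
    by (intro has_integral_mult_right has_integral_add exp_int_left K0 y integrable_integral i\<psi>)
  have IR: "integral {y..1} (\<lambda>z. exp (- K * (z - y)) * N z) \<le> A * \<Lambda> * (2 ^ p * ER + c * integral {y..1} \<psi>)"
  proof (rule has_integral_le[OF integrable_integral[OF iNR] hR])
    fix z assume z: "z \<in> {y..1}"
    hence "z \<in> {0..1}" "0 \<le> K * (z - y)" using y K0 by auto
    from pt[OF this] show "exp (- K * (z - y)) * N z \<le> A * \<Lambda> * (2 ^ p * exp (- K * (z - y)) + c * \<psi> z)" by simp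
  qed
  have IL: "integral {0..y} (\<lambda>z. exp (- K * (y - z)) * N z) \<le> A * \<Lambda> * (2 ^ p * EL + c * integral {0..y} \<psi>)"
  proof (rule has_integral_le[OF integrable_integral[OF iNL] hL])
    fix z assume z: "z \<in> {0..y}"
    hence "z \<in> {0..1}" "0 \<le> K * (y - z)" using y K0 by auto
    from pt[OF this] show "exp (- K * (y - z)) * N z \<le> A * \<Lambda> * (2 ^ p * exp (- K * (y - z)) + c * \<psi> z)" by simp
  qed
  have comb: "integral {0..y} \<psi> + integral {y..1} \<psi> = integral {0..1} \<psi>"
    using Henstock_Kurzweil_Integration.integral_combine[OF y i\<psi>] .
  have tot: "integral {0..1} \<psi> \<le> 2 * pi / K" unfolding \<psi>_def using psi_int_total[OF K0 e(1) y0] .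
  have ER: "K * ER \<le> 1" using K0 by (simp add: ER_def)
  have EL: "K * EL \<le> 1" using K0 by (simp add: EL_def)
  have c0: "0 \<le> c" by (simp add: c_def)
  have "K * (integral {y..1} (\<lambda>z. exp (- K * (z - y)) * N z) + integral {0..y} (\<lambda>z. exp (- K * (y - z)) * N z))
     \<le> K * (A * \<Lambda> * (2 ^ p * ER + c * integral {y..1} \<psi>) + A * \<Lambda> * (2 ^ p * EL + c * integral {0..y} \<psi>))"
    using IR IL K0 by (intro mult_left_mono) auto
  also have "\<dots> = A * \<Lambda> * (2 ^ p * (K * ER + K * EL) + c * (K * integral {0..1} \<psi>))"
    using comb[symmetric] by (simp add: algebra_simps)
  also have "\<dots> \<le> A * \<Lambda> * (2 ^ p * (1 + 1) + c * (2 * pi))"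
  proof (intro mult_left_mono add_mono)
    show "K * integral {0..1} \<psi> \<le> 2 * pi" using tot K0 by (simp add: field_simps)
  qed (use ER EL c0 A \<Lambda>0 in auto)
  also have "\<dots> = A * (1 + ln K) ^ p * (2 ^ (p + 1) + 4 * pi * (2 * real p) ^ p)"
    by (simp add: \<Lambda>_def c_def)
  finally show ?thesis .
qed


definition cA1 :: "real \<Rightarrow> real" where
  "cA1 t = ln (1 / (100 * t) + 1) + \<bar>ln (t / 200)\<bar> + pi + 1 / t"


locale S0 =
  fixes b :: "real \<Rightarrow> real" and \<theta> :: real and d :: "nat \<Rightarrow> real \<Rightarrow> real" and B2 :: real
    and eps :: real and k :: int and y0 :: real
  assumes th0: "0 < \<theta>" and th1: "\<theta> < 1/10"
    and d0: "\<forall>y\<in>{0..1}. d 0 y = b y"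
    and dd: "\<forall>j<4. \<forall>y\<in>{0..1}. (d j has_real_derivative d (Suc j) y) (at y within {0..1})"
    and d1b: "\<forall>y\<in>{0..1}. \<theta> / 100 \<le> \<bar>d 1 y\<bar> \<and> \<bar>d 1 y\<bar> \<le> 1 / (100 * \<theta>)"
    and B2: "\<forall>y\<in>{0..1}. \<bar>d 2 y\<bar> \<le> B2"
    and eps: "eps \<in> {-1/4..1/4}" "eps \<noteq> 0" and k: "k \<noteq> 0" and y0: "y0 \<in> {0..1}"
begin

abbreviation "D \<equiv> den b y0 eps"
abbreviation "Lg \<equiv> \<lambda>z. Ln (D z)"
abbreviation "LL \<equiv> \<lambda>z. Ln (D z) - complex_of_real (1 / \<theta>)"

lemma b_deriv: assumes y: "y \<in> {0..1}" shows "(b has_real_derivative d 1 y) (at y within {0..1})"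
proof -
  have "(0::nat) < 4" by simp
  with dd y have h: "(d 0 has_real_derivative d (Suc 0) y) (at y within {0..1})" by blast
  show ?thesis
    by (rule has_field_derivative_transform_within[OF h[simplified One_nat_def[symmetric]] zero_less_one y]) (use d0 in blast)
qed

lemma d1_deriv:
  assumes "y \<in> {0..1}" shows "(d 1 has_real_derivative d 2 y) (at y within {0..1})"
proof -
  have "(1::nat) < 4" by simp
  with dd assms have "(d 1 has_real_derivative d (Suc 1) y) (at y within {0..1})" by blast
  thus ?thesis by (simp add: numeral_2_eq_2)
qed

lemma d1_ne: assumes "y \<in> {0..1}" shows "d 1 y \<noteq> 0"
proof -
  have "0 < \<theta> / 100" using th0 by simp
  also have "\<dots> \<le> \<bar>d 1 y\<bar>" using d1b assms by blast
  finally show ?thesis by auto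
qed

lemma b_lip:
  assumes y: "y \<in> {0..1}"
  shows "\<theta> / 100 * \<bar>y - y0\<bar> \<le> \<bar>b y - b y0\<bar>" "\<bar>b y - b y0\<bar> \<le> 1 / (100 * \<theta>) * \<bar>y - y0\<bar>"
proof -
  have gen: "\<exists>x\<in>{0..1}. b v - b u = (v - u) * d 1 x" if uv: "u \<in> {0..1}" "v \<in> {0..1}" "u \<le> v" for u v
  proof -
    have "\<exists>x\<in>{u..v}. b v - b u = (\<lambda>h. d 1 x * h) (v - u)"
    proof (rule mvt_very_simple[OF uv(3)])
      fix x assume "u \<le> x" "x \<le> v"
      hence x: "x \<in> {0..1}" and sub: "{u..v} \<subseteq> {0..1}" using uv by auto
      show "(b has_derivative (\<lambda>h. d 1 x * h)) (at x within {u..v})"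
        using DERIV_subset[OF b_deriv[OF x] sub] by (simp add: has_field_derivative_def)
    qed
    thus ?thesis using uv by (auto simp: mult.commute)
  qed
  obtain x where x: "x \<in> {0..1}" "\<bar>b y - b y0\<bar> = \<bar>y - y0\<bar> * \<bar>d 1 x\<bar>"
  proof (cases "y0 \<le> y")
    case True
    then obtain x where "x \<in> {0..1}" "b y - b y0 = (y - y0) * d 1 x" using gen[OF y0 y] by blast
    thus ?thesis using that by (simp add: abs_mult)
  next
    case False
    then obtain x where x: "x \<in> {0..1}" and eq: "b y0 - b y = (y0 - y) * d 1 x" using gen[OF y y0] by force
    have "\<bar>b y - b y0\<bar> = \<bar>b y0 - b y\<bar>" by (rule abs_minus_commute)
    also have "\<dots> = \<bar>(y0 - y) * d 1 x\<bar>" by (simp only: eq)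
    also have "\<dots> = \<bar>y0 - y\<bar> * \<bar>d 1 x\<bar>" by (rule abs_mult)
    also have "\<bar>y0 - y\<bar> = \<bar>y - y0\<bar>" by (rule abs_minus_commute)
    finally show ?thesis by (rule that[OF x])
  qed
  have dx: "\<theta> / 100 \<le> \<bar>d 1 x\<bar>" "\<bar>d 1 x\<bar> \<le> 1 / (100 * \<theta>)" using d1b x(1) by auto
  have "\<theta> / 100 * \<bar>y - y0\<bar> \<le> \<bar>d 1 x\<bar> * \<bar>y - y0\<bar>" by (rule mult_right_mono[OF dx(1)]) simp
  thus "\<theta> / 100 * \<bar>y - y0\<bar> \<le> \<bar>b y - b y0\<bar>" by (metis x(2) mult.commute)
  have "\<bar>d 1 x\<bar> * \<bar>y - y0\<bar> \<le> 1 / (100 * \<theta>) * \<bar>y - y0\<bar>" by (rule mult_right_mono[OF dx(2)]) simp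
  thus "\<bar>b y - b y0\<bar> \<le> 1 / (100 * \<theta>) * \<bar>y - y0\<bar>" by (metis x(2) mult.commute)
qed

lemma Re_D: "Re (D z) = b z - b y0" and Im_D: "Im (D z) = eps"
  by (simp_all add: den_def)

lemma D_nonpos: "D z \<notin> \<real>\<^sub>\<le>\<^sub>0"
  using eps by (simp add: complex_nonpos_Reals_iff Im_D)

lemma D_ne: "D z \<noteq> 0"
  using eps by (metis Im_D zero_complex.sel(2))

lemma cmod_D_ge: "y \<in> {0..1} \<Longrightarrow> \<theta> / 200 * (\<bar>y - y0\<bar> + \<bar>eps\<bar>) \<le> cmod (D y)"
proof -
  assume y: "y \<in> {0..1}"
  have a: "\<bar>eps\<bar> \<le> cmod (D y)" using abs_Im_le_cmod[of "D y"] by (simp add: Im_D)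
  have b: "\<theta> / 100 * \<bar>y - y0\<bar> \<le> cmod (D y)" using abs_Re_le_cmod[of "D y"] b_lip[OF y] by (simp add: Re_D)
  have "\<theta> / 200 \<le> 1 / 2" using th1 by simp
  hence "\<theta> / 200 * \<bar>eps\<bar> \<le> 1 / 2 * \<bar>eps\<bar>" by (rule mult_right_mono) simp
  thus ?thesis using a b by (simp add: algebra_simps)
qed

lemma cmod_D_le: "y \<in> {0..1} \<Longrightarrow> cmod (D y) \<le> 1 / (100 * \<theta>) + 1/4"
proof -
  assume y: "y \<in> {0..1}"
  have "cmod (D y) \<le> \<bar>Re (D y)\<bar> + \<bar>Im (D y)\<bar>" by (rule cmod_le)
  also have "\<dots> \<le> 1 / (100 * \<theta>) * \<bar>y - y0\<bar> + 1/4"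
  proof -
    have "\<bar>eps\<bar> \<le> 1/4" using eps by auto
    thus ?thesis using b_lip(2)[OF y] by (simp add: Re_D Im_D)
  qed
  also have "1 / (100 * \<theta>) * \<bar>y - y0\<bar> \<le> 1 / (100 * \<theta>) * 1" using y y0 th0 by (intro mult_left_mono) auto
  finally show ?thesis by simp
qed

lemma LL_ge1: "y \<in> {0..1} \<Longrightarrow> 1 \<le> cmod (LL y)"
proof -
  assume y: "y \<in> {0..1}"
  have c0: "0 < cmod (D y)" using D_ne by simp
  have "Re (LL y) = ln (cmod (D y)) - 1 / \<theta>" using D_ne by (simp add: Re_Ln)
  also have "ln (cmod (D y)) \<le> cmod (D y) - 1" using c0 by (rule ln_le_minus_one)
  also have "cmod (D y) - 1 - 1 / \<theta> \<le> -1"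
  proof -
    have "cmod (D y) \<le> 1 / (100 * \<theta>) + 1/4" by (rule cmod_D_le[OF y])
    moreover have "1 / (100 * \<theta>) + 1/4 \<le> 1 / \<theta>"
    proof -
      have "1 / (100 * \<theta>) = (1 / \<theta>) / 100" by simp
      moreover have "10 \<le> 1 / \<theta>" using th0 th1 by (simp add: field_simps)
      ultimately show ?thesis by linarith
    qed
    ultimately show ?thesis by simp
  qed
  finally have "Re (LL y) \<le> -1" by simp
  thus ?thesis using abs_Re_le_cmod[of "LL y"] by simp
qed

lemma Lg_le: "y \<in> {0..1} \<Longrightarrow> cmod (Lg y) \<le> (1 + 1 / \<theta>) * cmod (LL y)"
proof -
  assume y: "y \<in> {0..1}"
  have n: "cmod (complex_of_real (1/\<theta>)) = 1 / \<theta>" using th0 by (simp only: norm_of_real) simp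
  have t1: "cmod (Lg y) \<le> cmod (LL y) + 1 / \<theta>"
    using norm_triangle_ineq[of "LL y" "complex_of_real (1/\<theta>)"] unfolding n by simp
  have t2: "1 / \<theta> * 1 \<le> 1 / \<theta> * cmod (LL y)" using LL_ge1[OF y] th0 by (intro mult_left_mono) auto
  from t1 t2 have "cmod (Lg y) \<le> cmod (LL y) + 1 / \<theta> * cmod (LL y)" by linarith
  thus ?thesis by (simp only: distrib_right mult_1_left)
qed

lemma cA1_ge1: "1 \<le> cA1 \<theta>"
proof -
  have "0 \<le> ln (1 / (100 * \<theta>) + 1)" using th0 by simp
  moreover have "1 \<le> 1 / \<theta>" using th0 th1 by (simp add: divide_simps)
  ultimately show ?thesis unfolding cA1_def using pi_gt3 by linarith
qed

lemma LL_le: "y \<in> {0..1} \<Longrightarrow> cmod (LL y) \<le> cA1 \<theta> * (1 + \<bar>ln (\<bar>y - y0\<bar> + \<bar>eps\<bar>)\<bar>)"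
proof -
  assume y: "y \<in> {0..1}"
  define t where "t = \<bar>y - y0\<bar> + \<bar>eps\<bar>"
  have t0: "0 < t" using eps by (simp add: t_def add_nonneg_pos)
  have c0: "0 < cmod (D y)" using D_ne by simp
  have up: "ln (cmod (D y)) \<le> ln (1 / (100 * \<theta>) + 1)"
  proof -
    have "0 < 1 / (100 * \<theta>)" using th0 by simp
    hence p: "0 < 1 / (100 * \<theta>) + 1" by linarith
    show ?thesis using cmod_D_le[OF y] c0 p by (subst ln_le_cancel_iff) auto
  qed
  have "ln (\<theta> / 200 * t) \<le> ln (cmod (D y))"
    using cmod_D_ge[OF y] t0 th0 D_ne[of y] by (subst ln_le_cancel_iff) (auto simp: t_def)
  moreover have "ln (\<theta> / 200 * t) = ln (\<theta> / 200) + ln t" by (rule ln_mult_pos) (use th0 t0 in auto)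
  ultimately have lo: "- \<bar>ln (\<theta> / 200)\<bar> - \<bar>ln t\<bar> \<le> ln (cmod (D y))" by linarith
  have up0: "0 \<le> ln (1 / (100 * \<theta>) + 1)" using th0 by simp
  have lnD: "\<bar>ln (cmod (D y))\<bar> \<le> ln (1 / (100 * \<theta>) + 1) + \<bar>ln (\<theta> / 200)\<bar> + \<bar>ln t\<bar>"
    using up lo up0 by (simp add: abs_le_iff)
  have "cmod (LL y) \<le> cmod (Lg y) + 1 / \<theta>"
  proof -
    have n: "cmod (complex_of_real (1/\<theta>)) = 1 / \<theta>" using th0 by (simp only: norm_of_real) simp
    show ?thesis using norm_triangle_ineq4[of "Lg y" "complex_of_real (1/\<theta>)"] unfolding n by simp
  qed
  also have "cmod (Lg y) \<le> \<bar>Re (Lg y)\<bar> + \<bar>Im (Lg y)\<bar>" by (rule cmod_le)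
  also have "\<bar>Re (Lg y)\<bar> = \<bar>ln (cmod (D y))\<bar>" using D_ne by (simp add: Re_Ln)
  also have "\<bar>Im (Lg y)\<bar> \<le> pi" using Im_Ln_le_pi[OF D_ne, of y] mpi_less_Im_Ln[OF D_ne, of y] by (simp add: abs_le_iff)
  finally have "cmod (LL y) \<le> cA1 \<theta> + \<bar>ln t\<bar>" using lnD unfolding cA1_def by linarith
  also have "\<dots> \<le> cA1 \<theta> * (1 + \<bar>ln t\<bar>)"
  proof -
    have "1 * \<bar>ln t\<bar> \<le> cA1 \<theta> * \<bar>ln t\<bar>" using cA1_ge1 by (intro mult_right_mono) auto
    thus ?thesis by (simp add: algebra_simps)
  qed
  finally show ?thesis by (simp add: t_def)
qed

end


lemma supnorm_nonneg: "0 \<le> supnorm \<phi>"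
  unfolding supnorm_def by (rule SUP_upper2[of 0]) auto

lemma supnorm_upper: "y \<in> {0..1} \<Longrightarrow> ereal (cmod (\<phi> y)) \<le> supnorm \<phi>"
  unfolding supnorm_def by (rule SUP_upper)

lemma supnorm_least: "(\<And>y. y \<in> {0..1} \<Longrightarrow> cmod (\<phi> y) \<le> B) \<Longrightarrow> supnorm \<phi> \<le> ereal B"
  unfolding supnorm_def by (rule SUP_least) simp

lemma supnorm_fin:
  assumes "supnorm \<phi> < \<infinity>" "y \<in> {0..1}"
  shows "cmod (\<phi> y) \<le> real_of_ereal (supnorm \<phi>)" "supnorm \<phi> = ereal (real_of_ereal (supnorm \<phi>))"
    "0 \<le> real_of_ereal (supnorm \<phi>)"
proof -
  have a: "0 \<le> supnorm \<phi>" by (rule supnorm_nonneg)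
  then obtain r where r: "supnorm \<phi> = ereal r" using assms(1) by (cases "supnorm \<phi>") auto
  show "cmod (\<phi> y) \<le> real_of_ereal (supnorm \<phi>)" using supnorm_upper[OF assms(2), of \<phi>] r by simp
  show "supnorm \<phi> = ereal (real_of_ereal (supnorm \<phi>))" using r by simp
  show "0 \<le> real_of_ereal (supnorm \<phi>)" using a r by simp
qed

context S0
begin

lemma D_deriv: "y \<in> {0..1} \<Longrightarrow> (D has_vector_derivative complex_of_real (d 1 y)) (at y within {0..1})"
proof -
  assume y: "y \<in> {0..1}"
  have "((\<lambda>z. b z - b y0) has_real_derivative d 1 y - 0) (at y within {0..1})"
    by (intro DERIV_diff b_deriv[OF y] DERIV_const)
  hence "((\<lambda>z. complex_of_real (b z - b y0)) has_vector_derivative complex_of_real (d 1 y)) (at y within {0..1})"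
    using has_vector_derivative_of_real by fastforce
  hence "((\<lambda>z. complex_of_real (b z - b y0) + \<i> * complex_of_real eps) has_vector_derivative complex_of_real (d 1 y) + 0) (at y within {0..1})"
    by (intro has_vector_derivative_add has_vector_derivative_const)
  thus ?thesis by (simp add: den_def[abs_def])
qed

lemma Lg_deriv: "y \<in> {0..1} \<Longrightarrow> (Lg has_vector_derivative complex_of_real (d 1 y) / D y) (at y within {0..1})"
proof -
  assume y: "y \<in> {0..1}"
  have "(Ln \<circ> D has_vector_derivative complex_of_real (d 1 y) * inverse (D y)) (at y within {0..1})"
    by (rule field_vector_diff_chain_within[OF D_deriv[OF y] has_field_derivative_at_within[OF has_field_derivative_Ln[OF D_nonpos]]])
  thus ?thesis by (simp add: o_def divide_inverse)
qed

lemma cont_from_deriv: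
  fixes g :: "real \<Rightarrow> 'a::real_normed_vector"
  assumes "\<And>y. y \<in> {0..1} \<Longrightarrow> (g has_vector_derivative g' y) (at y within {0..1})"
  shows "continuous_on {0..1} g"
  using assms has_vector_derivative_continuous continuous_on_eq_continuous_within by blast

lemma D_cont: "continuous_on {0..1} D" by (rule cont_from_deriv[OF D_deriv])
lemma Lg_cont: "continuous_on {0..1} Lg" by (rule cont_from_deriv[OF Lg_deriv])
lemma LL_cont: "continuous_on {0..1} LL" by (intro continuous_intros Lg_cont)

lemma d1_cont: "continuous_on {0..1} (d 1)"
  using d1_deriv has_real_derivative_iff_has_vector_derivative by (intro cont_from_deriv) blast

lemma d2_cont: "continuous_on {0..1} (d 2)"
proof -
  have "(d 2 has_real_derivative d 3 y) (at y within {0..1})" if "y \<in> {0..1}" for y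
  proof -
    have "(2::nat) < 4" by simp
    with dd that have "(d 2 has_real_derivative d (Suc 2) y) (at y within {0..1})" by blast
    thus ?thesis by (simp add: numeral_3_eq_3 numeral_2_eq_2)
  qed
  thus ?thesis using has_real_derivative_iff_has_vector_derivative by (intro cont_from_deriv) blast
qed

end


definition cG :: "real \<Rightarrow> real \<Rightarrow> real" where
  "cG t B = (100 / t) * (1 + B * (100 / t))"

locale S1 = S0 +
  fixes m :: nat and f :: "real \<Rightarrow> complex"
  assumes m1: "1 \<le> m" and m5: "m \<le> 5" and Yfin: "Ynorm b \<theta> k y0 eps m f < \<infinity>"
begin

abbreviation "K \<equiv> \<bar>real_of_int k\<bar>"
abbreviation "WF \<equiv> \<lambda>y. (dI f y / complex_of_real K) / LL y ^ (1 + m)"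
abbreviation "M1 \<equiv> real_of_ereal (supnorm f)"
abbreviation "M2 \<equiv> real_of_ereal (supnorm WF)"
abbreviation "r \<equiv> \<lambda>z. f z * complex_of_real (inverse (d 1 z))"
abbreviation "rd \<equiv> \<lambda>z. f z * complex_of_real (- (d 2 z * inverse (d 1 z ^ Suc (Suc 0)))) + dI f z * complex_of_real (inverse (d 1 z))"

lemma K1: "1 \<le> K" using k by linarith

lemma f_diff: "diffI f"
  using Yfin by (auto simp: Ynorm_def split: if_splits)

lemma fin12: "supnorm f < \<infinity>" "supnorm WF < \<infinity>"
proof -
  have s: "supnorm f + supnorm WF < \<infinity>" using Yfin f_diff by (simp add: Ynorm_def)
  have a: "0 \<le> supnorm f" "0 \<le> supnorm WF" by (rule supnorm_nonneg)+
  show "supnorm f < \<infinity>" "supnorm WF < \<infinity>" using s a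
    by (cases "supnorm f"; cases "supnorm WF"; simp)+
qed

lemma Ynorm_eq: "Ynorm b \<theta> k y0 eps m f = ereal (M1 + M2)" and M1_nn: "0 \<le> M1" and M2_nn: "0 \<le> M2"
proof -
  have "Ynorm b \<theta> k y0 eps m f = supnorm f + supnorm WF" using f_diff by (simp add: Ynorm_def)
  also have "\<dots> = ereal M1 + ereal M2"
    using supnorm_fin(2)[OF fin12(1), of 0] supnorm_fin(2)[OF fin12(2), of 0] by simp
  finally show "Ynorm b \<theta> k y0 eps m f = ereal (M1 + M2)" by simp
  show "0 \<le> M1" "0 \<le> M2" using supnorm_fin(3)[OF fin12(1), of 0] supnorm_fin(3)[OF fin12(2), of 0] by simp_all
qed

lemma f_bound: "y \<in> {0..1} \<Longrightarrow> cmod (f y) \<le> M1"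
  using supnorm_fin(1)[OF fin12(1)] by blast

lemma fd_bound: "y \<in> {0..1} \<Longrightarrow> cmod (dI f y) \<le> K * cmod (LL y) ^ (1 + m) * M2"
proof -
  assume y: "y \<in> {0..1}"
  have w: "cmod (WF y) \<le> M2" using supnorm_fin(1)[OF fin12(2) y] .
  have L1: "1 \<le> cmod (LL y)" using LL_ge1[OF y] .
  have Kp: "0 < K" using K1 by simp
  have "cmod (WF y) = cmod (dI f y) / K / cmod (LL y) ^ (1 + m)"
    by (simp only: norm_divide norm_power norm_of_real abs_abs)
  moreover have "\<And>A K X::real. K > 0 \<Longrightarrow> X > 0 \<Longrightarrow> A = A / K / X * (K * X)" by simp
  moreover have "0 < cmod (LL y) ^ (1 + m)" by (rule zero_less_power) (use L1 in linarith)
  ultimately have "cmod (dI f y) = cmod (WF y) * (K * cmod (LL y) ^ (1 + m))"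
    using Kp by metis
  also have "\<dots> \<le> M2 * (K * cmod (LL y) ^ (1 + m))"
    using w Kp L1 by (intro mult_right_mono) auto
  finally show ?thesis by (simp add: mult_ac)
qed

lemma f_deriv: "y \<in> {0..1} \<Longrightarrow> (f has_vector_derivative dI f y) (at y within {0..1})"
  using f_diff by (simp add: diffI_def dI_def vector_derivative_works)

lemma r_deriv: "y \<in> {0..1} \<Longrightarrow> (r has_vector_derivative rd y) (at y within {0..1})"
proof -
  assume y: "y \<in> {0..1}"
  have "((\<lambda>z. inverse (d 1 z)) has_real_derivative - (d 2 y * inverse (d 1 y ^ Suc (Suc 0)))) (at y within {0..1})"
    by (rule DERIV_inverse_fun[OF d1_deriv[OF y] d1_ne[OF y]])
  from has_vector_derivative_mult[OF f_deriv[OF y] has_vector_derivative_of_real[OF this]]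
  show ?thesis .
qed

lemma B2_nn: "0 \<le> B2" using B2 by (smt (verit) atLeastAtMost_iff zero_le_one order_refl)

lemma inv_d1: "y \<in> {0..1} \<Longrightarrow> \<bar>inverse (d 1 y)\<bar> \<le> 100 / \<theta>"
proof -
  assume y: "y \<in> {0..1}"
  have a: "\<theta> / 100 \<le> \<bar>d 1 y\<bar>" using d1b y by blast
  have p: "0 < \<theta> / 100" using th0 by simp
  have "\<bar>inverse (d 1 y)\<bar> = inverse \<bar>d 1 y\<bar>" by simp
  also have "\<dots> \<le> inverse (\<theta> / 100)" using a p by (rule le_imp_inverse_le)
  finally show ?thesis by simp
qed

lemma r_bound: "y \<in> {0..1} \<Longrightarrow> cmod (r y) \<le> M1 * (100 / \<theta>)"
proof -
  assume y: "y \<in> {0..1}"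
  have "cmod (r y) = cmod (f y) * \<bar>inverse (d 1 y)\<bar>" by (simp only: norm_mult norm_of_real)
  also have "\<dots> \<le> M1 * (100 / \<theta>)" by (rule mult_mono[OF f_bound[OF y] inv_d1[OF y] M1_nn abs_ge_zero])
  finally show ?thesis .
qed

lemma rd_bound0: "y \<in> {0..1} \<Longrightarrow> cmod (rd y) \<le> M1 * (B2 * (100 / \<theta>) ^ 2) + K * cmod (LL y) ^ (1 + m) * M2 * (100 / \<theta>)"
proof -
  assume y: "y \<in> {0..1}"
  have i: "\<bar>inverse (d 1 y)\<bar> \<le> 100 / \<theta>" by (rule inv_d1[OF y])
  have "\<bar>d 2 y * inverse (d 1 y ^ Suc (Suc 0))\<bar> = \<bar>d 2 y\<bar> * \<bar>inverse (d 1 y)\<bar> ^ 2"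
    by (simp add: abs_mult power2_eq_square)
  also have "\<dots> \<le> B2 * (100 / \<theta>) ^ 2" using B2 y i by (intro mult_mono power_mono) auto
  finally have t1: "\<bar>d 2 y * inverse (d 1 y ^ Suc (Suc 0))\<bar> \<le> B2 * (100 / \<theta>) ^ 2" .
  have "cmod (rd y) \<le> cmod (f y) * \<bar>d 2 y * inverse (d 1 y ^ Suc (Suc 0))\<bar> + cmod (dI f y) * \<bar>inverse (d 1 y)\<bar>"
    using norm_triangle_ineq[of "f y * complex_of_real (- (d 2 y * inverse (d 1 y ^ Suc (Suc 0))))" "dI f y * complex_of_real (inverse (d 1 y))"]
    by (simp only: norm_mult norm_of_real abs_minus_cancel)
  also have "\<dots> \<le> M1 * (B2 * (100 / \<theta>) ^ 2) + K * cmod (LL y) ^ (1 + m) * M2 * (100 / \<theta>)"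
  proof (rule add_mono)
    show "cmod (f y) * \<bar>d 2 y * inverse (d 1 y ^ Suc (Suc 0))\<bar> \<le> M1 * (B2 * (100 / \<theta>) ^ 2)"
      by (rule mult_mono[OF f_bound[OF y] t1 M1_nn abs_ge_zero])
    have nn: "0 \<le> K * cmod (LL y) ^ (1 + m) * M2" using M2_nn by (intro mult_nonneg_nonneg) auto
    show "cmod (dI f y) * \<bar>inverse (d 1 y)\<bar> \<le> K * cmod (LL y) ^ (1 + m) * M2 * (100 / \<theta>)"
      by (rule mult_mono[OF fd_bound[OF y] i nn abs_ge_zero])
  qed
  finally show ?thesis .
qed

lemma r_comb: "y \<in> {0..1} \<Longrightarrow> K * cmod (r y) + cmod (rd y) \<le> K * cmod (LL y) ^ (1 + m) * (cG \<theta> B2 * (M1 + M2))"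
proof -
  assume y: "y \<in> {0..1}"
  define c where "c = 100 / \<theta>"
  define X where "X = cmod (LL y) ^ (1 + m)"
  have c0: "0 \<le> c" using th0 by (simp add: c_def)
  have X1: "1 \<le> X" unfolding X_def by (rule one_le_power[OF LL_ge1[OF y]])
  have KX: "1 \<le> K * X" using K1 X1 by (metis mult_mono' mult_1 zero_le_one order_trans)
  have h1: "K * cmod (r y) \<le> K * X * (M1 * c)"
  proof -
    have "K * cmod (r y) \<le> K * (M1 * c)" unfolding c_def by (rule mult_left_mono[OF r_bound[OF y]]) (use K1 in linarith)
    also have "\<dots> \<le> K * X * (M1 * c)"
    proof -
      have "K * (M1 * c) * 1 \<le> K * (M1 * c) * X" using X1 K1 M1_nn c0 by (intro mult_left_mono) auto
      thus ?thesis by (simp add: mult_ac)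
    qed
    finally show ?thesis .
  qed
  have h2: "M1 * (B2 * c ^ 2) \<le> K * X * (M1 * (B2 * c ^ 2))"
    using KX M1_nn B2_nn c0 by (simp add: mult_left_le_one_le mult_right_mono[of 1 "K * X", simplified])
  have h3: "cmod (rd y) \<le> K * X * (M1 * (B2 * c ^ 2)) + K * X * (M2 * c)"
    using rd_bound0[OF y] h2 unfolding c_def X_def by (simp add: mult_ac)
  have "K * cmod (r y) + cmod (rd y) \<le> K * X * (M1 * c + M1 * (B2 * c ^ 2) + M2 * c)"
    using h1 h3 by (simp add: algebra_simps)
  also have "\<dots> \<le> K * X * (cG \<theta> B2 * (M1 + M2))"
  proof (intro mult_left_mono)
    have "M1 * (B2 * c ^ 2) \<le> (M1 + M2) * (B2 * c ^ 2)" using M2_nn B2_nn by (intro mult_right_mono) auto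
    thus "M1 * c + M1 * (B2 * c ^ 2) + M2 * c \<le> cG \<theta> B2 * (M1 + M2)"
      by (simp add: cG_def c_def[symmetric] power2_eq_square algebra_simps)
  qed (use KX in auto)
  finally show ?thesis by (simp add: X_def)
qed

lemma rd_bound: "y \<in> {0..1} \<Longrightarrow> cmod (rd y) \<le> K * cmod (LL y) ^ (1 + m) * (cG \<theta> B2 * (M1 + M2))"
  using r_comb[of y] K1 by (smt (verit) mult_nonneg_nonneg norm_ge_zero)

end


context S1
begin

abbreviation "kr \<equiv> real_of_int k"
abbreviation "sK \<equiv> kr * sinh kr"
abbreviation "F \<equiv> \<lambda>z. f z / D z"
abbreviation "Sa \<equiv> \<lambda>z. complex_of_real (sinh (kr * z))"
abbreviation "Sb \<equiv> \<lambda>z. complex_of_real (sinh (kr * (1 - z)))"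
abbreviation "Ca \<equiv> \<lambda>z. complex_of_real (cosh (kr * z))"
abbreviation "Cb \<equiv> \<lambda>z. complex_of_real (cosh (kr * (1 - z)))"
abbreviation "PP \<equiv> \<lambda>y. integral {y..1} (\<lambda>z. Sb z * F z)"
abbreviation "QQ \<equiv> \<lambda>y. integral {0..y} (\<lambda>z. Sa z * F z)"
abbreviation "UU \<equiv> \<lambda>y. complex_of_real (1 / sK) * (Sa y * PP y + Sb y * QQ y)"
abbreviation "U1 \<equiv> \<lambda>y. complex_of_real (kr / sK) * (Ca y * PP y - Cb y * QQ y)"

lemma sK_pos: "0 < sK"
proof (cases "k > 0")
  case True thus ?thesis by (simp add: mult_pos_pos)
next
  case False
  hence "kr < 0" using k by simp
  thus ?thesis by (simp add: mult_neg_neg)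
qed

lemma f_cont: "continuous_on {0..1} f" by (rule cont_from_deriv[OF f_deriv])

lemma F_cont: "continuous_on {0..1} F"
  using D_ne by (intro continuous_on_divide f_cont D_cont) auto

lemma SaF_cont: "continuous_on {0..1} (\<lambda>z. Sa z * F z)"
  by (rule continuous_on_mult[OF _ F_cont]) (intro continuous_intros)
lemma SbF_cont: "continuous_on {0..1} (\<lambda>z. Sb z * F z)"
  by (rule continuous_on_mult[OF _ F_cont]) (intro continuous_intros)

lemma Top_eq:
  assumes y: "y \<in> {0..1}"
  shows "Top b k y0 eps f y = UU y"
proof -
  define G where "G = (\<lambda>z. complex_of_real (Green k y z) * f z / D z)"
  have GL: "G z = complex_of_real (sinh (kr * (1 - y)) / sK) * (Sa z * F z)" if z: "z \<in> {0..y}" for z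
  proof (cases "y \<le> z")
    case True
    hence "z = y" using z by auto
    thus ?thesis by (simp add: G_def Green_def mult_ac)
  next
    case False
    thus ?thesis by (simp add: G_def Green_def mult_ac)
  qed
  have GR: "G z = complex_of_real (sinh (kr * y) / sK) * (Sb z * F z)" if z: "z \<in> {y..1}" for z
    using z by (simp add: G_def Green_def mult_ac)
  have iL0: "(\<lambda>z. Sa z * F z) integrable_on {0..y}"
    using y by (intro integrable_on_subinterval[OF integrable_continuous_interval[OF SaF_cont]]) auto
  have iR0: "(\<lambda>z. Sb z * F z) integrable_on {y..1}"
    using y by (intro integrable_on_subinterval[OF integrable_continuous_interval[OF SbF_cont]]) auto
  have iL: "G integrable_on {0..y}"
    by (rule integrable_eq[OF integrable_on_mult_right[OF iL0, of "complex_of_real (sinh (kr * (1 - y)) / sK)"]]) (metis GL)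
  have iR: "G integrable_on {y..1}"
    by (rule integrable_eq[OF integrable_on_mult_right[OF iR0, of "complex_of_real (sinh (kr * y) / sK)"]]) (metis GR)
  have yy: "0 \<le> y" "y \<le> 1" using y by auto
  have iG: "G integrable_on {0..1}" by (rule Henstock_Kurzweil_Integration.integrable_combine[OF yy iL iR])
  have "Top b k y0 eps f y = integral {0..1} G" by (simp add: Top_def G_def)
  also have "\<dots> = integral {0..y} G + integral {y..1} G"
    using Henstock_Kurzweil_Integration.integral_combine[OF yy iG] by simp
  also have "integral {0..y} G = integral {0..y} (\<lambda>z. complex_of_real (sinh (kr * (1 - y)) / sK) * (Sa z * F z))"
    by (rule integral_cong) (metis GL)
  also have "\<dots> = complex_of_real (sinh (kr * (1 - y)) / sK) * QQ y"
    by (rule integral_mult_right)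
  also have "integral {y..1} G = integral {y..1} (\<lambda>z. complex_of_real (sinh (kr * y) / sK) * (Sb z * F z))"
    by (rule integral_cong) (metis GR)
  also have "\<dots> = complex_of_real (sinh (kr * y) / sK) * PP y"
    by (rule integral_mult_right)
  finally show ?thesis by (simp add: algebra_simps)
qed

lemma QQ_deriv: "y \<in> {0..1} \<Longrightarrow> (QQ has_vector_derivative Sa y * F y) (at y within {0..1})"
  by (rule integral_has_vector_derivative[OF SaF_cont])

lemma PP_deriv: assumes y: "y \<in> {0..1}" shows "(PP has_vector_derivative - (Sb y * F y)) (at y within {0..1})"
proof -
  define I0 where "I0 = integral {0..1} (\<lambda>z. Sb z * F z)"
  have eq: "PP x = I0 - integral {0..x} (\<lambda>z. Sb z * F z)" if x: "x \<in> {0..1}" for x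
  proof -
    have "0 \<le> x" "x \<le> 1" using x by auto
    from Henstock_Kurzweil_Integration.integral_combine[OF this integrable_continuous_interval[OF SbF_cont]]
    show ?thesis by (simp add: I0_def algebra_simps)
  qed
  have "((\<lambda>x. I0 - integral {0..x} (\<lambda>z. Sb z * F z)) has_vector_derivative 0 - Sb y * F y) (at y within {0..1})"
    by (intro has_vector_derivative_diff has_vector_derivative_const integral_has_vector_derivative[OF SbF_cont y])
  hence d1: "((\<lambda>x. I0 - integral {0..x} (\<lambda>z. Sb z * F z)) has_vector_derivative - (Sb y * F y)) (at y within {0..1})"
    by simp
  show ?thesis
  proof (rule has_vector_derivative_transform[OF y _ d1])
    fix x :: real assume "x \<in> {0..1}" thus "PP x = I0 - integral {0..x} (\<lambda>z. Sb z * F z)" by (rule eq)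
  qed
qed

lemma Sa_deriv: "(Sa has_vector_derivative complex_of_real (kr * cosh (kr * y))) (at y within S)"
proof -
  have "((\<lambda>z. sinh (kr * z)) has_real_derivative kr * cosh (kr * y)) (at y)"
    by (auto intro!: derivative_eq_intros)
  thus ?thesis by (rule has_vector_derivative_at_within[OF has_vector_derivative_of_real])
qed
lemma Sb_deriv: "(Sb has_vector_derivative complex_of_real (- (kr * cosh (kr * (1 - y))))) (at y within S)"
proof -
  have "((\<lambda>z. sinh (kr * (1 - z))) has_real_derivative - (kr * cosh (kr * (1 - y)))) (at y)"
    by (auto intro!: derivative_eq_intros)
  thus ?thesis by (rule has_vector_derivative_at_within[OF has_vector_derivative_of_real])
qed
lemma Ca_deriv: "(Ca has_vector_derivative complex_of_real (kr * sinh (kr * y))) (at y within S)"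
proof -
  have "((\<lambda>z. cosh (kr * z)) has_real_derivative kr * sinh (kr * y)) (at y)"
    by (auto intro!: derivative_eq_intros)
  thus ?thesis by (rule has_vector_derivative_at_within[OF has_vector_derivative_of_real])
qed
lemma Cb_deriv: "(Cb has_vector_derivative complex_of_real (- (kr * sinh (kr * (1 - y))))) (at y within S)"
proof -
  have "((\<lambda>z. cosh (kr * (1 - z))) has_real_derivative - (kr * sinh (kr * (1 - y)))) (at y)"
    by (auto intro!: derivative_eq_intros)
  thus ?thesis by (rule has_vector_derivative_at_within[OF has_vector_derivative_of_real])
qed

lemma alg_UU: fixes c sa sb pp qq FF X ca cb kk :: complex
  shows "c * ((sa * (- (sb * FF)) + (kk * ca) * pp) + (sb * (sa * FF) + (- (kk * cb)) * qq)) + 0 * X = (c * kk) * (ca * pp - cb * qq)"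
  by (simp add: algebra_simps)

lemma alg_U1: fixes c sa sb pp qq FF X ca cb kk :: complex
  shows "c * ((ca * (- (sb * FF)) + (kk * sa) * pp) - (cb * (sa * FF) + (- (kk * sb)) * qq))
     = c * kk * (sa * pp + sb * qq) - c * (ca * sb + cb * sa) * FF"
  by (simp add: algebra_simps)

lemma UU_deriv: assumes y: "y \<in> {0..1}" shows "(UU has_vector_derivative U1 y) (at y within {0..1})"
proof -
  have "(UU has_vector_derivative
     complex_of_real (1 / sK) * ((Sa y * (- (Sb y * F y)) + complex_of_real (kr * cosh (kr * y)) * PP y)
        + (Sb y * (Sa y * F y) + complex_of_real (- (kr * cosh (kr * (1 - y)))) * QQ y))
     + 0 * (Sa y * PP y + Sb y * QQ y)) (at y within {0..1})"
    by (intro has_vector_derivative_mult has_vector_derivative_add has_vector_derivative_const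
        Sa_deriv Sb_deriv PP_deriv[OF y] QQ_deriv[OF y])
  moreover have "complex_of_real (1 / sK) * ((Sa y * (- (Sb y * F y)) + complex_of_real (kr * cosh (kr * y)) * PP y)
        + (Sb y * (Sa y * F y) + complex_of_real (- (kr * cosh (kr * (1 - y)))) * QQ y))
     + 0 * (Sa y * PP y + Sb y * QQ y) = U1 y"
  proof -
    have "complex_of_real (1 / sK) * ((Sa y * (- (Sb y * F y)) + complex_of_real (kr * cosh (kr * y)) * PP y)
        + (Sb y * (Sa y * F y) + complex_of_real (- (kr * cosh (kr * (1 - y)))) * QQ y))
     + 0 * (Sa y * PP y + Sb y * QQ y) = (complex_of_real (1 / sK) * complex_of_real kr) * (Ca y * PP y - Cb y * QQ y)"
      unfolding of_real_mult of_real_minus by (rule alg_UU)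
    also have "complex_of_real (1 / sK) * complex_of_real kr = complex_of_real (kr / sK)"
      by (simp only: of_real_mult[symmetric]) simp
    finally show ?thesis .
  qed
  ultimately show ?thesis by simp
qed

lemma sinh_id: "cosh (kr * y) * sinh (kr * (1 - y)) + cosh (kr * (1 - y)) * sinh (kr * y) = sinh kr"
proof -
  have "sinh (kr * y + kr * (1 - y)) = sinh (kr * y) * cosh (kr * (1 - y)) + cosh (kr * y) * sinh (kr * (1 - y))"
    by (rule sinh_add)
  moreover have "kr * y + kr * (1 - y) = kr" by (simp add: algebra_simps)
  ultimately show ?thesis by (simp add: algebra_simps)
qed

lemma U1_deriv: assumes y: "y \<in> {0..1}"
  shows "(U1 has_vector_derivative complex_of_real (kr ^ 2) * UU y - F y) (at y within {0..1})"
proof -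
  have "(U1 has_vector_derivative
     complex_of_real (kr / sK) * ((Ca y * (- (Sb y * F y)) + complex_of_real (kr * sinh (kr * y)) * PP y)
        - (Cb y * (Sa y * F y) + complex_of_real (- (kr * sinh (kr * (1 - y)))) * QQ y))
     + 0 * (Ca y * PP y - Cb y * QQ y)) (at y within {0..1})"
    by (intro has_vector_derivative_mult has_vector_derivative_diff has_vector_derivative_const
        Ca_deriv Cb_deriv PP_deriv[OF y] QQ_deriv[OF y])
  moreover have "complex_of_real (kr / sK) * ((Ca y * (- (Sb y * F y)) + complex_of_real (kr * sinh (kr * y)) * PP y)
        - (Cb y * (Sa y * F y) + complex_of_real (- (kr * sinh (kr * (1 - y)))) * QQ y))
     + 0 * (Ca y * PP y - Cb y * QQ y) = complex_of_real (kr ^ 2) * UU y - F y"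
  proof -
    have hs: "Ca y * Sb y + Cb y * Sa y = complex_of_real (sinh kr)"
      using arg_cong[OF sinh_id, of complex_of_real] by simp
    have one: "complex_of_real (kr / sK) * complex_of_real (sinh kr) = 1"
    proof -
      have "kr / sK * sinh kr = 1" using sK_pos k by (simp add: field_simps)
      hence "complex_of_real (kr / sK * sinh kr) = 1" by simp
      thus ?thesis by (simp only: of_real_mult)
    qed
    have "complex_of_real (kr / sK) * ((Ca y * (- (Sb y * F y)) + complex_of_real (kr * sinh (kr * y)) * PP y)
        - (Cb y * (Sa y * F y) + complex_of_real (- (kr * sinh (kr * (1 - y)))) * QQ y))
       = complex_of_real (kr / sK) * complex_of_real kr * (Sa y * PP y + Sb y * QQ y)
         - complex_of_real (kr / sK) * (Ca y * Sb y + Cb y * Sa y) * F y"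
      unfolding of_real_mult of_real_minus by (rule alg_U1)
    also have "complex_of_real (kr / sK) * complex_of_real kr = complex_of_real (kr ^ 2) * complex_of_real (1 / sK)"
    proof -
      have "kr / sK * kr = kr ^ 2 * (1 / sK)" by (simp add: power2_eq_square)
      thus ?thesis by (simp only: of_real_mult[symmetric])
    qed
    also have "complex_of_real (kr ^ 2) * complex_of_real (1 / sK) * (Sa y * PP y + Sb y * QQ y)
         - complex_of_real (kr / sK) * (Ca y * Sb y + Cb y * Sa y) * F y = complex_of_real (kr ^ 2) * UU y - F y"
      unfolding hs one by (simp only: mult.assoc mult_1_left)
    finally show ?thesis by simp
  qed
  ultimately show ?thesis by simp
qed

end


lemma abs_sinh_le_cosh: "\<bar>sinh (x::real)\<bar> \<le> cosh x"
proof -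
  have "\<bar>sinh x\<bar>\<^sup>2 \<le> (cosh x)\<^sup>2" using cosh_square_eq[of x] by simp
  thus ?thesis by (rule power2_le_imp_le) (simp add: less_imp_le)
qed

lemma cosh_le_exp_abs: "cosh (x::real) \<le> exp \<bar>x\<bar>"
proof -
  have e: "exp x \<le> exp \<bar>x\<bar>" "exp (- x) \<le> exp \<bar>x\<bar>" by auto
  have "2 * cosh x = exp x + exp (- x)" by (simp add: cosh_def)
  thus ?thesis using e by linarith
qed

lemma sinh_ge_exp: assumes "1 \<le> (K::real)" shows "exp K / 4 \<le> sinh K"
proof -
  have "exp (- K) \<le> 1" using assms by simp
  moreover have "2 \<le> exp K"
  proof -
    have "1 + K \<le> exp K" by (rule exp_ge_add_one_self)
    thus ?thesis using assms by linarith
  qed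
  moreover have "2 * sinh K = exp K - exp (- K)" by (simp add: sinh_def)
  ultimately show ?thesis by linarith
qed

context S1
begin

lemma sK_eq: "sK = K * sinh K"
proof -
  have "K * sinh K = K * \<bar>sinh kr\<bar>" by (simp add: sinh_real_abs)
  also have "\<dots> = \<bar>sK\<bar>" by (simp add: abs_mult)
  also have "\<dots> = sK" using sK_pos by simp
  finally show ?thesis by simp
qed

lemma kern:
  assumes a: "0 \<le> a" and c: "0 \<le> c"
  shows "cosh (kr * a) * cosh (kr * c) * K \<le> 4 * sK * exp (- K * (1 - a - c))"
proof -
  have e1: "cosh (kr * a) \<le> exp (K * a)" using cosh_le_exp_abs[of "kr * a"] a by (simp add: abs_mult)
  have e2: "cosh (kr * c) \<le> exp (K * c)" using cosh_le_exp_abs[of "kr * c"] c by (simp add: abs_mult)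
  have "cosh (kr * a) * cosh (kr * c) * K \<le> exp (K * a) * exp (K * c) * K"
    using e1 e2 K1 by (intro mult_right_mono mult_mono) auto
  also have "exp (K * a) * exp (K * c) = exp K * exp (- K * (1 - a - c))"
    by (simp add: exp_add[symmetric] algebra_simps)
  also have "exp K * exp (- K * (1 - a - c)) * K \<le> (4 * sinh K) * exp (- K * (1 - a - c)) * K"
    using sinh_ge_exp[OF K1] K1 by (intro mult_right_mono) auto
  also have "\<dots> = 4 * sK * exp (- K * (1 - a - c))" by (simp add: sK_eq)
  finally show ?thesis .
qed

abbreviation "Pha \<equiv> \<lambda>z. Sa z * r z * Lg z"
abbreviation "Phb \<equiv> \<lambda>z. Sb z * r z * Lg z"
abbreviation "Wa \<equiv> \<lambda>z. (complex_of_real (kr * cosh (kr * z)) * r z + Sa z * rd z) * Lg z"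
abbreviation "Wb \<equiv> \<lambda>z. (complex_of_real (- (kr * cosh (kr * (1 - z)))) * r z + Sb z * rd z) * Lg z"

lemma rLg': "y \<in> {0..1} \<Longrightarrow> r y * (complex_of_real (d 1 y) / D y) = F y"
  using d1_ne[of y] by (simp add: field_simps of_real_inverse[symmetric])

lemma Pha_deriv: "y \<in> {0..1} \<Longrightarrow> (Pha has_vector_derivative Wa y + Sa y * F y) (at y within {0..1})"
proof -
  assume y: "y \<in> {0..1}"
  have "(Pha has_vector_derivative Sa y * r y * (complex_of_real (d 1 y) / D y) + (Sa y * rd y + complex_of_real (kr * cosh (kr * y)) * r y) * Lg y) (at y within {0..1})"
    by (intro has_vector_derivative_mult Sa_deriv r_deriv[OF y] Lg_deriv[OF y])
  moreover have eq: "Sa y * r y * (complex_of_real (d 1 y) / D y) = Sa y * F y"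
    using rLg'[OF y] by (simp only: mult.assoc)
  ultimately have "(Pha has_vector_derivative Sa y * F y + (Sa y * rd y + complex_of_real (kr * cosh (kr * y)) * r y) * Lg y) (at y within {0..1})"
    by (simp only: eq)
  moreover have gen: "\<And>a b c d::complex. a + (b + c) * d = (c + b) * d + a" by (simp add: algebra_simps)
  ultimately show ?thesis by (simp only: gen)
qed

lemma Phb_deriv: "y \<in> {0..1} \<Longrightarrow> (Phb has_vector_derivative Wb y + Sb y * F y) (at y within {0..1})"
proof -
  assume y: "y \<in> {0..1}"
  have "(Phb has_vector_derivative Sb y * r y * (complex_of_real (d 1 y) / D y) + (Sb y * rd y + complex_of_real (- (kr * cosh (kr * (1 - y)))) * r y) * Lg y) (at y within {0..1})"
    by (intro has_vector_derivative_mult Sb_deriv r_deriv[OF y] Lg_deriv[OF y])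
  moreover have eq: "Sb y * r y * (complex_of_real (d 1 y) / D y) = Sb y * F y"
    using rLg'[OF y] by (simp only: mult.assoc)
  ultimately have "(Phb has_vector_derivative Sb y * F y + (Sb y * rd y + complex_of_real (- (kr * cosh (kr * (1 - y)))) * r y) * Lg y) (at y within {0..1})"
    by (simp only: eq)
  moreover have gen: "\<And>a b c d::complex. a + (b + c) * d = (c + b) * d + a" by (simp add: algebra_simps)
  ultimately show ?thesis by (simp only: gen)
qed

lemma IWa: assumes y: "y \<in> {0..1}"
  shows "Wa integrable_on {0..y}" "integral {0..y} Wa = Pha y - QQ y"
proof -
  have y0': "0 \<le> y" using y by auto
  have sub: "{0..y} \<subseteq> {0..1}" using y by auto
  have "((\<lambda>z. Wa z + Sa z * F z) has_integral Pha y - Pha 0) {0..y}"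
  proof (rule fundamental_theorem_of_calculus[OF y0'])
    fix x assume "x \<in> {0..y}" hence x: "x \<in> {0..1}" using sub by auto
    show "(Pha has_vector_derivative Wa x + Sa x * F x) (at x within {0..y})"
      by (rule has_vector_derivative_within_subset[OF Pha_deriv[OF x] sub])
  qed
  hence h1: "((\<lambda>z. Wa z + Sa z * F z) has_integral Pha y) {0..y}" by simp
  have h2: "((\<lambda>z. Sa z * F z) has_integral QQ y) {0..y}"
    using integrable_on_subinterval[OF integrable_continuous_interval[OF SaF_cont] sub] by (simp add: has_integral_integral)
  have "((\<lambda>z. (Wa z + Sa z * F z) - Sa z * F z) has_integral Pha y - QQ y) {0..y}"
    by (rule has_integral_diff[OF h1 h2])
  hence h3: "(Wa has_integral Pha y - QQ y) {0..y}" by simp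
  show "Wa integrable_on {0..y}" using h3 by blast
  show "integral {0..y} Wa = Pha y - QQ y" using h3 by (rule integral_unique)
qed

lemma IWb: assumes y: "y \<in> {0..1}"
  shows "Wb integrable_on {y..1}" "integral {y..1} Wb = - Phb y - PP y"
proof -
  have y1: "y \<le> 1" using y by auto
  have sub: "{y..1} \<subseteq> {0..1}" using y by auto
  have "((\<lambda>z. Wb z + Sb z * F z) has_integral Phb 1 - Phb y) {y..1}"
  proof (rule fundamental_theorem_of_calculus[OF y1])
    fix x assume "x \<in> {y..1}" hence x: "x \<in> {0..1}" using sub by auto
    show "(Phb has_vector_derivative Wb x + Sb x * F x) (at x within {y..1})"
      by (rule has_vector_derivative_within_subset[OF Phb_deriv[OF x] sub])
  qed
  hence h1: "((\<lambda>z. Wb z + Sb z * F z) has_integral - Phb y) {y..1}" by simp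
  have h2: "((\<lambda>z. Sb z * F z) has_integral PP y) {y..1}"
    using integrable_on_subinterval[OF integrable_continuous_interval[OF SbF_cont] sub] by (simp add: has_integral_integral)
  have "((\<lambda>z. (Wb z + Sb z * F z) - Sb z * F z) has_integral - Phb y - PP y) {y..1}"
    by (rule has_integral_diff[OF h1 h2])
  hence h3: "(Wb has_integral - Phb y - PP y) {y..1}" by simp
  show "Wb integrable_on {y..1}" using h3 by blast
  show "integral {y..1} Wb = - Phb y - PP y" using h3 by (rule integral_unique)
qed

abbreviation "EE \<equiv> cG \<theta> B2 * (M1 + M2) * (1 + 1 / \<theta>)"
abbreviation "NN \<equiv> \<lambda>z. cmod (LL z) ^ (m + 2)"
abbreviation "JR \<equiv> \<lambda>y. integral {y..1} (\<lambda>z. exp (- K * (z - y)) * NN z)"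
abbreviation "JL \<equiv> \<lambda>y. integral {0..y} (\<lambda>z. exp (- K * (y - z)) * NN z)"

lemma cG_nn: "0 \<le> cG \<theta> B2" using th0 B2_nn by (simp add: cG_def)
lemma EE_nn: "0 \<le> EE" using cG_nn M1_nn M2_nn th0 by simp

lemma pow_alg: "\<And>c K l G t::real. c * (K * l ^ (1 + m) * G) * (t * l) = c * K * l ^ (m + 2) * (G * t)"
  by (simp add: power_add power_Suc mult_ac)

lemma W_gen:
  assumes z: "z \<in> {0..1}" and h: "\<bar>kc\<bar> \<le> K * ch" "\<bar>sh\<bar> \<le> ch" "0 \<le> ch"
  shows "cmod ((complex_of_real kc * r z + complex_of_real sh * rd z) * Lg z) \<le> ch * K * NN z * EE"
proof -
  have a1: "cmod (complex_of_real kc * r z + complex_of_real sh * rd z) \<le> ch * (K * cmod (r z) + cmod (rd z))"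
  proof -
    have "cmod (complex_of_real kc * r z + complex_of_real sh * rd z)
        \<le> cmod (complex_of_real kc * r z) + cmod (complex_of_real sh * rd z)" by (rule norm_triangle_ineq)
    also have "cmod (complex_of_real kc * r z) = \<bar>kc\<bar> * cmod (r z)" by (simp only: norm_mult norm_of_real)
    also have "\<bar>kc\<bar> * cmod (r z) \<le> K * ch * cmod (r z)" using h by (intro mult_right_mono) auto
    also have "cmod (complex_of_real sh * rd z) = \<bar>sh\<bar> * cmod (rd z)" by (simp only: norm_mult norm_of_real)
    also have "\<bar>sh\<bar> * cmod (rd z) \<le> ch * cmod (rd z)" using h by (intro mult_right_mono) auto
    finally show ?thesis by (simp add: algebra_simps)
  qed
  also have "\<dots> \<le> ch * (K * cmod (LL z) ^ (1 + m) * (cG \<theta> B2 * (M1 + M2)))"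
    using r_comb[OF z] h by (intro mult_left_mono) auto
  finally have a2: "cmod (complex_of_real kc * r z + complex_of_real sh * rd z) \<le> ch * (K * cmod (LL z) ^ (1 + m) * (cG \<theta> B2 * (M1 + M2)))" .
  have a3: "cmod (Lg z) \<le> (1 + 1 / \<theta>) * cmod (LL z)" by (rule Lg_le[OF z])
  have "cmod ((complex_of_real kc * r z + complex_of_real sh * rd z) * Lg z)
      = cmod (complex_of_real kc * r z + complex_of_real sh * rd z) * cmod (Lg z)" by (rule norm_mult)
  also have "\<dots> \<le> ch * (K * cmod (LL z) ^ (1 + m) * (cG \<theta> B2 * (M1 + M2))) * ((1 + 1 / \<theta>) * cmod (LL z))"
  proof (rule mult_mono[OF a2 a3 _ norm_ge_zero])
    show "0 \<le> ch * (K * cmod (LL z) ^ (1 + m) * (cG \<theta> B2 * (M1 + M2)))"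
      using h(3) cG_nn M1_nn M2_nn by (intro mult_nonneg_nonneg) auto
  qed
  also have "\<dots> = ch * K * NN z * EE" by (rule pow_alg)
  finally show ?thesis .
qed

lemma Wa_bound: "z \<in> {0..1} \<Longrightarrow> cmod (Wa z) \<le> cosh (kr * z) * K * NN z * EE"
  by (rule W_gen) (auto simp: abs_mult abs_sinh_le_cosh less_imp_le)

lemma Wb_bound: "z \<in> {0..1} \<Longrightarrow> cmod (Wb z) \<le> cosh (kr * (1 - z)) * K * NN z * EE"
  by (rule W_gen) (auto simp: abs_mult abs_sinh_le_cosh less_imp_le)

lemma NN_cont: "continuous_on {0..1} NN"
  by (intro continuous_intros LL_cont)

lemma expNN_int_R: "y \<in> {0..1} \<Longrightarrow> (\<lambda>z. exp (- K * (z - y)) * NN z) integrable_on {y..1}"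
  by (intro integrable_continuous_interval continuous_intros continuous_on_subset[OF NN_cont]) auto
lemma expNN_int_L: "y \<in> {0..1} \<Longrightarrow> (\<lambda>z. exp (- K * (y - z)) * NN z) integrable_on {0..y}"
  by (intro integrable_continuous_interval continuous_intros continuous_on_subset[OF NN_cont]) auto

lemma IWb_w:
  assumes y: "y \<in> {0..1}" and w: "0 \<le> w" "w \<le> cosh (kr * y)"
  shows "w * cmod (integral {y..1} Wb) \<le> 4 * sK * EE * JR y"
proof -
  have sub: "{y..1} \<subseteq> {0..1}" using y by auto
  define g where "g = (\<lambda>z. cosh (kr * (1 - z)) * K * NN z * EE)"
  have ig: "g integrable_on {y..1}" unfolding g_def
    by (intro integrable_continuous_interval continuous_intros continuous_on_subset[OF NN_cont]) (use sub in auto)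
  have h1: "cmod (integral {y..1} Wb) \<le> integral {y..1} g"
    by (rule integral_norm_bound_integral[OF IWb(1)[OF y] ig]) (use sub Wb_bound in \<open>auto simp: g_def\<close>)
  have "w * cmod (integral {y..1} Wb) \<le> w * integral {y..1} g" using h1 w by (intro mult_left_mono) auto
  also have "\<dots> = integral {y..1} (\<lambda>z. w * g z)" by (rule integral_mult_right[symmetric])
  also have "\<dots> \<le> integral {y..1} (\<lambda>z. (4 * sK * EE) * (exp (- K * (z - y)) * NN z))"
  proof (rule integral_le)
    show "(\<lambda>z. w * g z) integrable_on {y..1}" by (rule integrable_on_mult_right[OF ig])
    show "(\<lambda>z. (4 * sK * EE) * (exp (- K * (z - y)) * NN z)) integrable_on {y..1}"
      by (rule integrable_on_mult_right[OF expNN_int_R[OF y]])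
  next
    fix z assume z: "z \<in> {y..1}"
    have k1: "cosh (kr * y) * cosh (kr * (1 - z)) * K \<le> 4 * sK * exp (- K * (z - y))"
      using kern[of y "1 - z"] z y by simp
    have k0: "w * cosh (kr * (1 - z)) * K \<le> cosh (kr * y) * cosh (kr * (1 - z)) * K"
      using w by (intro mult_right_mono) (auto simp: less_imp_le)
    have q: "0 \<le> NN z * EE" using EE_nn by simp
    have ineq: "(w * cosh (kr * (1 - z)) * K) * (NN z * EE) \<le> (4 * sK * exp (- K * (z - y))) * (NN z * EE)"
      using order_trans[OF k0 k1] q by (rule mult_right_mono)
    have gen: "\<And>w c K N E s x::real. (w * c * K) * (N * E) \<le> (4 * s * x) * (N * E) \<Longrightarrow> w * (c * K * N * E) \<le> (4 * s * E) * (x * N)"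
      by (simp add: mult_ac)
    show "w * g z \<le> (4 * sK * EE) * (exp (- K * (z - y)) * NN z)" unfolding g_def by (rule gen[OF ineq])
  qed
  also have "\<dots> = 4 * sK * EE * JR y" by (rule integral_mult_right)
  finally show ?thesis .
qed

lemma IWa_w:
  assumes y: "y \<in> {0..1}" and w: "0 \<le> w" "w \<le> cosh (kr * (1 - y))"
  shows "w * cmod (integral {0..y} Wa) \<le> 4 * sK * EE * JL y"
proof -
  have sub: "{0..y} \<subseteq> {0..1}" using y by auto
  define g where "g = (\<lambda>z. cosh (kr * z) * K * NN z * EE)"
  have ig: "g integrable_on {0..y}" unfolding g_def
    by (intro integrable_continuous_interval continuous_intros continuous_on_subset[OF NN_cont]) (use sub in auto)
  have h1: "cmod (integral {0..y} Wa) \<le> integral {0..y} g"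
    by (rule integral_norm_bound_integral[OF IWa(1)[OF y] ig]) (use sub Wa_bound in \<open>auto simp: g_def\<close>)
  have "w * cmod (integral {0..y} Wa) \<le> w * integral {0..y} g" using h1 w by (intro mult_left_mono) auto
  also have "\<dots> = integral {0..y} (\<lambda>z. w * g z)" by (rule integral_mult_right[symmetric])
  also have "\<dots> \<le> integral {0..y} (\<lambda>z. (4 * sK * EE) * (exp (- K * (y - z)) * NN z))"
  proof (rule integral_le)
    show "(\<lambda>z. w * g z) integrable_on {0..y}" by (rule integrable_on_mult_right[OF ig])
    show "(\<lambda>z. (4 * sK * EE) * (exp (- K * (y - z)) * NN z)) integrable_on {0..y}"
      by (rule integrable_on_mult_right[OF expNN_int_L[OF y]])
  next
    fix z assume z: "z \<in> {0..y}"
    have k1: "cosh (kr * z) * cosh (kr * (1 - y)) * K \<le> 4 * sK * exp (- K * (y - z))"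
      using kern[of z "1 - y"] z y by simp
    have k0: "cosh (kr * z) * w * K \<le> cosh (kr * z) * cosh (kr * (1 - y)) * K"
      using w by (intro mult_right_mono mult_left_mono) (auto simp: less_imp_le)
    have q: "0 \<le> NN z * EE" using EE_nn by simp
    have ineq: "(cosh (kr * z) * w * K) * (NN z * EE) \<le> (4 * sK * exp (- K * (y - z))) * (NN z * EE)"
      using order_trans[OF k0 k1] q by (rule mult_right_mono)
    have gen: "\<And>w c K N E s x::real. (c * w * K) * (N * E) \<le> (4 * s * x) * (N * E) \<Longrightarrow> w * (c * K * N * E) \<le> (4 * s * E) * (x * N)"
      by (simp add: mult_ac)
    show "w * g z \<le> (4 * sK * EE) * (exp (- K * (y - z)) * NN z)" unfolding g_def by (rule gen[OF ineq])
  qed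
  also have "\<dots> = 4 * sK * EE * JL y" by (rule integral_mult_right)
  finally show ?thesis .
qed

lemma alg_rep1: fixes c sa sb rr ll iwa iwb :: complex
  shows "c * (sa * (- (sb * rr * ll) - iwb) + sb * (sa * rr * ll - iwa)) = - c * (sa * iwb + sb * iwa)"
  by (simp add: algebra_simps)

lemma alg_rep2: fixes c ca cb sa sb rr ll iwa iwb :: complex
  assumes h: "c * (ca * sb + cb * sa) = 1"
  shows "c * (ca * (- (sb * rr * ll) - iwb) - cb * (sa * rr * ll - iwa)) + rr * ll = c * (cb * iwa - ca * iwb)"
proof -
  have "c * (ca * (- (sb * rr * ll) - iwb) - cb * (sa * rr * ll - iwa)) + rr * ll
      = c * (cb * iwa - ca * iwb) + rr * ll * (1 - c * (ca * sb + cb * sa))"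
    by (simp add: algebra_simps)
  also have "\<dots> = c * (cb * iwa - ca * iwb)" using h by simp
  finally show ?thesis .
qed

lemma PQ_repr: assumes y: "y \<in> {0..1}"
  shows "PP y = - Phb y - integral {y..1} Wb" "QQ y = Pha y - integral {0..y} Wa"
  using IWb(2)[OF y] IWa(2)[OF y] by (simp_all add: algebra_simps)

lemma UU_repr: assumes y: "y \<in> {0..1}"
  shows "UU y = - complex_of_real (1 / sK) * (Sa y * integral {y..1} Wb + Sb y * integral {0..y} Wa)"
  unfolding PQ_repr[OF y] by (rule alg_rep1)

lemma W_repr: assumes y: "y \<in> {0..1}"
  shows "U1 y + r y * Lg y = complex_of_real (kr / sK) * (Cb y * integral {0..y} Wa - Ca y * integral {y..1} Wb)"
proof -
  have hs: "Ca y * Sb y + Cb y * Sa y = complex_of_real (sinh kr)"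
    using arg_cong[OF sinh_id, of complex_of_real] by simp
  have one: "complex_of_real (kr / sK) * (Ca y * Sb y + Cb y * Sa y) = 1"
  proof -
    have "kr / sK * sinh kr = 1" using sK_pos k by (simp add: field_simps)
    hence "complex_of_real (kr / sK * sinh kr) = 1" by simp
    thus ?thesis unfolding hs by (simp only: of_real_mult)
  qed
  show ?thesis unfolding PQ_repr[OF y] by (rule alg_rep2[OF one])
qed

lemma UU_bound: assumes y: "y \<in> {0..1}" shows "cmod (UU y) \<le> 4 * EE * (JR y + JL y)"
proof -
  have sp: "0 < sK" by (rule sK_pos)
  have "cmod (UU y) = (1 / sK) * cmod (Sa y * integral {y..1} Wb + Sb y * integral {0..y} Wa)"
    unfolding UU_repr[OF y] using sp by (simp only: norm_mult norm_minus_cancel norm_of_real) simp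
  also have "\<dots> \<le> (1 / sK) * (\<bar>sinh (kr * y)\<bar> * cmod (integral {y..1} Wb) + \<bar>sinh (kr * (1 - y))\<bar> * cmod (integral {0..y} Wa))"
  proof (rule mult_left_mono)
    show "cmod (Sa y * integral {y..1} Wb + Sb y * integral {0..y} Wa) \<le> \<bar>sinh (kr * y)\<bar> * cmod (integral {y..1} Wb) + \<bar>sinh (kr * (1 - y))\<bar> * cmod (integral {0..y} Wa)"
      using norm_triangle_ineq[of "Sa y * integral {y..1} Wb" "Sb y * integral {0..y} Wa"] by (simp only: norm_mult norm_of_real)
  qed (use sp in simp)
  also have "\<dots> \<le> (1 / sK) * (4 * sK * EE * JR y + 4 * sK * EE * JL y)"
    using sp IWb_w[OF y abs_ge_zero abs_sinh_le_cosh] IWa_w[OF y abs_ge_zero abs_sinh_le_cosh]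
    by (intro mult_left_mono add_mono) auto
  also have "\<dots> = 4 * EE * (JR y + JL y)"
  proof -
    have gen: "\<And>s E a b::real. s > 0 \<Longrightarrow> (1 / s) * (4 * s * E * a + 4 * s * E * b) = 4 * E * (a + b)"
      by (simp add: field_simps)
    show ?thesis by (rule gen[OF sp])
  qed
  finally show ?thesis .
qed

lemma W_bound: assumes y: "y \<in> {0..1}" shows "cmod (U1 y + r y * Lg y) \<le> 4 * EE * K * (JR y + JL y)"
proof -
  have sp: "0 < sK" by (rule sK_pos)
  have "cmod (U1 y + r y * Lg y) = (K / sK) * cmod (Cb y * integral {0..y} Wa - Ca y * integral {y..1} Wb)"
  proof -
    have ab: "\<bar>kr / sK\<bar> = K / sK" using sp by (simp only: abs_divide abs_of_pos)
    show ?thesis unfolding W_repr[OF y] by (simp only: norm_mult norm_of_real ab)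
  qed
  also have "\<dots> \<le> (K / sK) * (cosh (kr * (1 - y)) * cmod (integral {0..y} Wa) + cosh (kr * y) * cmod (integral {y..1} Wb))"
  proof (rule mult_left_mono)
    show "cmod (Cb y * integral {0..y} Wa - Ca y * integral {y..1} Wb) \<le> cosh (kr * (1 - y)) * cmod (integral {0..y} Wa) + cosh (kr * y) * cmod (integral {y..1} Wb)"
      using norm_triangle_ineq4[of "Cb y * integral {0..y} Wa" "Ca y * integral {y..1} Wb"]
      by (simp only: norm_mult norm_of_real) (simp add: less_imp_le)
  qed (use sp in simp)
  also have "\<dots> \<le> (K / sK) * (4 * sK * EE * JL y + 4 * sK * EE * JR y)"
    using sp IWa_w[OF y _ order_refl] IWb_w[OF y _ order_refl]
    by (intro mult_left_mono add_mono) (auto simp: less_imp_le)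
  also have "\<dots> = 4 * EE * K * (JR y + JL y)"
  proof -
    have gen: "\<And>s E a b K::real. s > 0 \<Longrightarrow> (K / s) * (4 * s * E * a + 4 * s * E * b) = 4 * E * K * (b + a)"
      by (simp add: field_simps)
    show ?thesis by (rule gen[OF sp])
  qed
  finally show ?thesis .
qed

end


definition cJ :: "real \<Rightarrow> real" where
  "cJ t = cA1 t ^ 7 * (1 + 2 / ln 2) ^ 7 * (2 ^ 8 + 4 * pi * 14 ^ 7)"

definition cC :: "real \<Rightarrow> real \<Rightarrow> real" where
  "cC t B = cG t B * (1 + 1 / t) * (12 * cJ t + 3 / (ln 2 / 2) ^ 7) + 1"

lemma pow_ge_l0:
  fixes x l :: real and p :: nat
  assumes l: "0 < l" "l \<le> 1" and x: "l \<le> x" and p: "p \<le> 7"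
  shows "l ^ 7 \<le> x ^ p"
proof (cases "x \<ge> 1")
  case True
  have "l ^ 7 \<le> 1" using l by (simp add: power_le_one)
  also have "1 \<le> x ^ p" using True by (simp add: one_le_power)
  finally show ?thesis .
next
  case False
  have "l ^ 7 \<le> x ^ 7" using l x by (intro power_mono) auto
  also have "x ^ 7 \<le> x ^ p" using False l x p by (intro power_decreasing) auto
  finally show ?thesis .
qed

context S1
begin

abbreviation "lg \<equiv> ln (jbr kr)"

lemma lg_facts: "ln K \<le> lg" "ln 2 / 2 \<le> lg" "1 + ln K \<le> (1 + 2 / ln 2) * lg"
proof -
  have kk: "1 \<le> kr\<^sup>2" using K1 by (metis abs_le_square_iff abs_one power_one)
  have j: "jbr kr = sqrt (1 + kr\<^sup>2)" by (simp add: jbr_def)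
  have "kr\<^sup>2 \<le> 1 + kr\<^sup>2" by simp
  hence "sqrt (kr\<^sup>2) \<le> sqrt (1 + kr\<^sup>2)" by (rule real_sqrt_le_mono)
  hence "K \<le> jbr kr" by (simp add: j)
  thus a: "ln K \<le> lg" using K1 by simp
  have "sqrt 2 \<le> jbr kr" using kk by (simp add: j)
  moreover have jp: "0 < jbr kr" unfolding j by (simp add: add_pos_nonneg)
  ultimately have "ln (sqrt 2) \<le> lg" by (subst ln_le_cancel_iff) auto
  thus b: "ln 2 / 2 \<le> lg" by (simp add: ln_sqrt)
  have l2: "0 < ln (2::real)" by simp
  have h: "1 \<le> 2 / ln 2 * lg"
  proof -
    have "2 / ln 2 * (ln 2 / 2) \<le> 2 / ln 2 * lg" using b l2 by (intro mult_left_mono) auto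
    thus ?thesis using l2 by simp
  qed
  show "1 + ln K \<le> (1 + 2 / ln 2) * lg" unfolding distrib_right mult_1_left using a h by linarith
qed

lemma lg_pos: "0 < lg"
proof -
  have "0 < ln 2 / (2::real)" by simp
  thus ?thesis using lg_facts(2) by linarith
qed

lemma J_bound: assumes y: "y \<in> {0..1}" shows "K * (JR y + JL y) \<le> cJ \<theta> * lg ^ (m + 2)"
proof -
  have p1: "1 \<le> m + 2" and p7: "m + 2 \<le> 7" using m1 m5 by auto
  have A0: "0 \<le> cA1 \<theta> ^ (m + 2)" using cA1_ge1 by simp
  have e: "0 < \<bar>eps\<bar>" "\<bar>eps\<bar> \<le> 1/2" using eps by auto
  have yy: "0 \<le> y" "y \<le> 1" and yy0: "0 \<le> y0" "y0 \<le> 1" using y y0 by auto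
  have Nb: "NN z \<le> cA1 \<theta> ^ (m + 2) * (1 + \<bar>ln (\<bar>z - y0\<bar> + \<bar>eps\<bar>)\<bar>) ^ (m + 2)" if z: "z \<in> {0..1}" for z
  proof -
    have "NN z \<le> (cA1 \<theta> * (1 + \<bar>ln (\<bar>z - y0\<bar> + \<bar>eps\<bar>)\<bar>)) ^ (m + 2)"
      by (rule power_mono[OF LL_le[OF z] norm_ge_zero])
    thus ?thesis by (simp only: power_mult_distrib)
  qed
  have c0: "0 \<le> cA1 \<theta>" using cA1_ge1 by simp
  have l2': "0 \<le> 1 + 2 / ln (2::real)" by (simp add: add_nonneg_nonneg)
  have nn: "0 \<le> cA1 \<theta> ^ 7 * ((1 + 2 / ln 2) ^ 7 * lg ^ (m + 2))"
    using c0 lg_pos l2' by (intro mult_nonneg_nonneg zero_le_power) auto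
  have "K * (JR y + JL y) \<le> cA1 \<theta> ^ (m + 2) * (1 + ln K) ^ (m + 2) * (2 ^ ((m + 2) + 1) + 4 * pi * (2 * real (m + 2)) ^ (m + 2))"
    using key_integral[OF K1 e yy yy0 p1 A0 NN_cont Nb] by simp
  also have "\<dots> \<le> cA1 \<theta> ^ 7 * ((1 + 2 / ln 2) ^ 7 * lg ^ (m + 2)) * (2 ^ 8 + 4 * pi * 14 ^ 7)"
  proof (intro mult_mono add_mono)
    show "cA1 \<theta> ^ (m + 2) \<le> cA1 \<theta> ^ 7" using cA1_ge1 p7 by (rule power_increasing[rotated])
    have l2: "0 < ln (2::real)" by simp
    have "(1 + ln K) ^ (m + 2) \<le> ((1 + 2 / ln 2) * lg) ^ (m + 2)"
      using lg_facts(3) K1 by (intro power_mono) auto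
    also have "\<dots> = (1 + 2 / ln 2) ^ (m + 2) * lg ^ (m + 2)" by (rule power_mult_distrib)
    also have "(1 + 2 / ln (2::real)) ^ (m + 2) \<le> (1 + 2 / ln 2) ^ 7" using l2 p7 by (intro power_increasing) auto
    finally show "(1 + ln K) ^ (m + 2) \<le> (1 + 2 / ln 2) ^ 7 * lg ^ (m + 2)" using lg_pos by (simp add: mult_right_mono)
    show "(2::real) ^ ((m + 2) + 1) \<le> 2 ^ 8" using p7 by (intro power_increasing) auto
    have "(2 * real (m + 2)) ^ (m + 2) \<le> 14 ^ (m + 2)" using p7 by (intro power_mono) auto
    also have "(14::real) ^ (m + 2) \<le> 14 ^ 7" using p7 by (intro power_increasing) auto
    finally show "(2 * real (m + 2)) ^ (m + 2) \<le> 14 ^ 7" .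
  qed (use A0 K1 lg_pos c0 nn in auto)
  also have "\<dots> = cJ \<theta> * lg ^ (m + 2)" by (simp add: cJ_def mult_ac)
  finally show ?thesis by simp
qed

abbreviation "uu \<equiv> Top b k y0 eps f"
abbreviation "QJ \<equiv> cJ \<theta> * lg ^ (m + 2)"
abbreviation "YY \<equiv> M1 + M2"

lemma u_deriv: assumes y: "y \<in> {0..1}" shows "(uu has_vector_derivative U1 y) (at y within {0..1})"
proof (rule has_vector_derivative_transform[OF y _ UU_deriv[OF y]])
  fix x :: real assume "x \<in> {0..1}" thus "uu x = UU x" by (rule Top_eq)
qed

lemma u_diff: "diffI uu"
  unfolding diffI_def using u_deriv differentiableI_vector by blast

lemma dI_eq: assumes y: "y \<in> {0..1}" and d: "(g has_vector_derivative g') (at y within {0..1})"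
  shows "dI g y = g'"
  using vector_derivative_within_cbox[of 0 1 y g g'] y d by (simp add: dI_def box_real)

lemma dI_u: "y \<in> {0..1} \<Longrightarrow> dI uu y = U1 y"
  by (rule dI_eq[OF _ u_deriv])

abbreviation "gg \<equiv> \<lambda>y. - r y"
abbreviation "hh \<equiv> \<lambda>y. dI uu y + r y * Lg y"

lemma g_deriv: "y \<in> {0..1} \<Longrightarrow> (gg has_vector_derivative - rd y) (at y within {0..1})"
  by (rule has_vector_derivative_minus[OF r_deriv])

lemma h_deriv: assumes y: "y \<in> {0..1}"
  shows "(hh has_vector_derivative complex_of_real (kr ^ 2) * UU y + rd y * Lg y) (at y within {0..1})"
proof -
  have "((\<lambda>x. U1 x + r x * Lg x) has_vector_derivative
      (complex_of_real (kr ^ 2) * UU y - F y) + (r y * (complex_of_real (d 1 y) / D y) + rd y * Lg y)) (at y within {0..1})"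
    by (intro has_vector_derivative_add has_vector_derivative_mult U1_deriv[OF y] r_deriv[OF y] Lg_deriv[OF y])
  hence d: "((\<lambda>x. U1 x + r x * Lg x) has_vector_derivative complex_of_real (kr ^ 2) * UU y + rd y * Lg y) (at y within {0..1})"
    unfolding rLg'[OF y] by simp
  show ?thesis
  proof (rule has_vector_derivative_transform[OF y _ d])
    fix x :: real assume "x \<in> {0..1}" thus "hh x = U1 x + r x * Lg x" by (simp add: dI_u)
  qed
qed

lemma div_bound: "0 < (a1::real) \<Longrightarrow> 0 < b1 \<Longrightarrow> c1 \<le> a1 * b1 * d1 \<Longrightarrow> c1 / a1 / b1 \<le> d1"
  by (simp add: divide_le_eq mult_ac)

lemma JRL_bound: "y \<in> {0..1} \<Longrightarrow> JR y + JL y \<le> QJ / K"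
  using J_bound[of y] K1 by (simp add: le_divide_eq mult.commute)

lemma u_bound: "y \<in> {0..1} \<Longrightarrow> cmod (uu y) \<le> 4 * EE * QJ / K"
proof -
  assume y: "y \<in> {0..1}"
  have "cmod (uu y) \<le> 4 * EE * (JR y + JL y)" using UU_bound[OF y] Top_eq[OF y] by simp
  also have "\<dots> \<le> 4 * EE * (QJ / K)" using JRL_bound[OF y] EE_nn by (intro mult_left_mono) auto
  finally show ?thesis by simp
qed

lemma KUU_bound: "y \<in> {0..1} \<Longrightarrow> K * cmod (UU y) \<le> 4 * EE * QJ"
proof -
  assume y: "y \<in> {0..1}"
  have "K * cmod (UU y) \<le> K * (4 * EE * (JR y + JL y))" using UU_bound[OF y] K1 by (intro mult_left_mono) auto
  also have "\<dots> = 4 * EE * (K * (JR y + JL y))" by (simp add: mult_ac)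
  also have "\<dots> \<le> 4 * EE * QJ" using J_bound[OF y] EE_nn by (intro mult_left_mono) auto
  finally show ?thesis .
qed

lemma h_bound: "y \<in> {0..1} \<Longrightarrow> cmod (hh y) \<le> 4 * EE * QJ"
proof -
  assume y: "y \<in> {0..1}"
  have "cmod (hh y) = cmod (U1 y + r y * Lg y)" by (simp add: dI_u[OF y])
  also have "\<dots> \<le> 4 * EE * K * (JR y + JL y)" by (rule W_bound[OF y])
  also have "\<dots> = 4 * EE * (K * (JR y + JL y))" by (simp add: mult_ac)
  also have "\<dots> \<le> 4 * EE * QJ" using J_bound[OF y] EE_nn by (intro mult_left_mono) auto
  finally show ?thesis .
qed

lemma cG_ge: "100 / \<theta> \<le> cG \<theta> B2"
proof -
  have "100 / \<theta> * 1 \<le> 100 / \<theta> * (1 + B2 * (100 / \<theta>))"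
    using th0 B2_nn by (intro mult_left_mono) auto
  thus ?thesis by (simp add: cG_def)
qed

lemma Yg_bound: "Ynorm b \<theta> k y0 eps m gg \<le> ereal (2 * (cG \<theta> B2 * YY))"
proof -
  have dg: "diffI gg" unfolding diffI_def using g_deriv differentiableI_vector by blast
  have s1: "supnorm gg \<le> ereal (cG \<theta> B2 * YY)"
  proof (rule supnorm_least)
    fix y :: real assume y: "y \<in> {0..1}"
    have "cmod (gg y) \<le> M1 * (100 / \<theta>)" using r_bound[OF y] by simp
    also have "\<dots> \<le> YY * cG \<theta> B2" using M1_nn M2_nn cG_ge th0 by (intro mult_mono) auto
    finally show "cmod (gg y) \<le> cG \<theta> B2 * YY" by (simp add: mult_ac)
  qed
  have s2: "supnorm (\<lambda>y. (dI gg y / complex_of_real K) / LL y ^ (1 + m)) \<le> ereal (cG \<theta> B2 * YY)"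
  proof (rule supnorm_least)
    fix y :: real assume y: "y \<in> {0..1}"
    have X: "0 < cmod (LL y) ^ (1 + m)" using LL_ge1[OF y] by (intro zero_less_power) linarith
    have "cmod ((dI gg y / complex_of_real K) / LL y ^ (1 + m)) = cmod (rd y) / K / cmod (LL y) ^ (1 + m)"
      unfolding dI_eq[OF y g_deriv[OF y]] by (simp only: norm_divide norm_minus_cancel norm_of_real norm_power abs_abs)
    also have "\<dots> \<le> cG \<theta> B2 * YY"
      using div_bound[OF _ X rd_bound[OF y]] K1 by simp
    finally show "cmod ((dI gg y / complex_of_real K) / LL y ^ (1 + m)) \<le> cG \<theta> B2 * YY" .
  qed
  have "Ynorm b \<theta> k y0 eps m gg = supnorm gg + supnorm (\<lambda>y. (dI gg y / complex_of_real K) / LL y ^ (1 + m))"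
    using dg by (simp add: Ynorm_def)
  also have "\<dots> \<le> ereal (cG \<theta> B2 * YY) + ereal (cG \<theta> B2 * YY)" by (rule add_mono[OF s1 s2])
  finally show ?thesis by simp
qed

end


context S1
begin

lemma cJ_nn: "0 \<le> cJ \<theta>"
proof -
  have a: "0 \<le> cA1 \<theta>" using cA1_ge1 by simp
  have b: "0 \<le> 1 + 2 / ln (2::real)" by (simp add: add_nonneg_nonneg)
  have c: "0 \<le> (2::real) ^ 8 + 4 * pi * 14 ^ 7" by (simp add: add_nonneg_nonneg)
  show ?thesis unfolding cJ_def using a b c by (intro mult_nonneg_nonneg zero_le_power) auto
qed

lemma pow_alg2: "\<And>K l G t::real. (K * l ^ (1 + m) * G) * (t * l) = K * l ^ (1 + (m + 1)) * (t * G)"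
  by (simp add: power_Suc mult_ac)

lemma Yh_bound: "Ynorm b \<theta> k y0 eps (m + 1) hh \<le> ereal (4 * EE * QJ + (4 * EE * QJ + (1 + 1 / \<theta>) * (cG \<theta> B2 * YY)))"
proof -
  have dh: "diffI hh" unfolding diffI_def using h_deriv differentiableI_vector by blast
  have s1: "supnorm hh \<le> ereal (4 * EE * QJ)" by (rule supnorm_least) (rule h_bound)
  have s2: "supnorm (\<lambda>y. (dI hh y / complex_of_real K) / LL y ^ (1 + (m + 1))) \<le> ereal (4 * EE * QJ + (1 + 1 / \<theta>) * (cG \<theta> B2 * YY))"
  proof (rule supnorm_least)
    fix y :: real assume y: "y \<in> {0..1}"
    have L1: "1 \<le> cmod (LL y)" by (rule LL_ge1[OF y])
    have X1: "1 \<le> cmod (LL y) ^ (1 + (m + 1))" using L1 by (rule one_le_power)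
    hence X: "0 < cmod (LL y) ^ (1 + (m + 1))" by linarith
    have t1: "cmod (complex_of_real (kr ^ 2) * UU y) \<le> K * cmod (LL y) ^ (1 + (m + 1)) * (4 * EE * QJ)"
    proof -
      have "cmod (complex_of_real (kr ^ 2) * UU y) = K * (K * cmod (UU y))"
      proof -
        have kk: "\<bar>kr ^ 2\<bar> = K * K" by (simp add: power2_eq_square abs_mult)
        show ?thesis by (simp only: norm_mult norm_of_real kk mult.assoc)
      qed
      also have "\<dots> \<le> K * (4 * EE * QJ)" using KUU_bound[OF y] K1 by (intro mult_left_mono) auto
      also have "\<dots> \<le> K * cmod (LL y) ^ (1 + (m + 1)) * (4 * EE * QJ)"
      proof -
        have q: "0 \<le> K * (4 * EE * QJ)" using K1 EE_nn lg_pos cJ_nn by simp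
        have "K * (4 * EE * QJ) * 1 \<le> K * (4 * EE * QJ) * cmod (LL y) ^ (1 + (m + 1))"
          using q X1 by (rule mult_left_mono[rotated])
        thus ?thesis by (simp add: mult_ac)
      qed
      finally show ?thesis .
    qed
    have t2: "cmod (rd y * Lg y) \<le> K * cmod (LL y) ^ (1 + (m + 1)) * ((1 + 1 / \<theta>) * (cG \<theta> B2 * YY))"
    proof -
      have "cmod (rd y * Lg y) = cmod (rd y) * cmod (Lg y)" by (rule norm_mult)
      also have "\<dots> \<le> (K * cmod (LL y) ^ (1 + m) * (cG \<theta> B2 * YY)) * ((1 + 1 / \<theta>) * cmod (LL y))"
      proof (rule mult_mono[OF rd_bound[OF y] Lg_le[OF y] _ norm_ge_zero])
        show "0 \<le> K * cmod (LL y) ^ (1 + m) * (cG \<theta> B2 * YY)"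
          using cG_nn M1_nn M2_nn by (intro mult_nonneg_nonneg) auto
      qed
      also have "\<dots> = K * cmod (LL y) ^ (1 + (m + 1)) * ((1 + 1 / \<theta>) * (cG \<theta> B2 * YY))" by (rule pow_alg2)
      finally show ?thesis .
    qed
    have "cmod (dI hh y) \<le> K * cmod (LL y) ^ (1 + (m + 1)) * (4 * EE * QJ + (1 + 1 / \<theta>) * (cG \<theta> B2 * YY))"
    proof -
      have "cmod (dI hh y) \<le> cmod (complex_of_real (kr ^ 2) * UU y) + cmod (rd y * Lg y)"
        unfolding dI_eq[OF y h_deriv[OF y]] by (rule norm_triangle_ineq)
      also have "\<dots> \<le> K * cmod (LL y) ^ (1 + (m + 1)) * (4 * EE * QJ) + K * cmod (LL y) ^ (1 + (m + 1)) * ((1 + 1 / \<theta>) * (cG \<theta> B2 * YY))"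
        by (rule add_mono[OF t1 t2])
      finally show ?thesis by (simp only: distrib_left)
    qed
    hence "cmod (dI hh y) / K / cmod (LL y) ^ (1 + (m + 1)) \<le> 4 * EE * QJ + (1 + 1 / \<theta>) * (cG \<theta> B2 * YY)"
      using div_bound[OF _ X] K1 by simp
    moreover have "cmod ((dI hh y / complex_of_real K) / LL y ^ (1 + (m + 1))) = cmod (dI hh y) / K / cmod (LL y) ^ (1 + (m + 1))"
      by (simp only: norm_divide norm_of_real norm_power abs_abs)
    ultimately show "cmod ((dI hh y / complex_of_real K) / LL y ^ (1 + (m + 1))) \<le> 4 * EE * QJ + (1 + 1 / \<theta>) * (cG \<theta> B2 * YY)" by simp
  qed
  have "Ynorm b \<theta> k y0 eps (m + 1) hh = supnorm hh + supnorm (\<lambda>y. (dI hh y / complex_of_real K) / LL y ^ (1 + (m + 1)))"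
    using dh by (simp add: Ynorm_def)
  also have "\<dots> \<le> ereal (4 * EE * QJ) + ereal (4 * EE * QJ + (1 + 1 / \<theta>) * (cG \<theta> B2 * YY))" by (rule add_mono[OF s1 s2])
  finally show ?thesis by simp
qed

lemma final_real:
  "4 * EE * QJ / K + 1 / K * (2 * (cG \<theta> B2 * YY) + (4 * EE * QJ + (4 * EE * QJ + (1 + 1 / \<theta>) * (cG \<theta> B2 * YY))))
     \<le> cC \<theta> B2 / K * lg ^ (m + 2) * YY"
proof -
  define G where "G = cG \<theta> B2"
  define t where "t = 1 + 1 / \<theta>"
  define L where "L = lg ^ (m + 2)"
  define l0 where "l0 = ln 2 / (2::real)"
  have G0: "0 \<le> G" using cG_nn by (simp add: G_def)
  have t1: "1 \<le> t" using th0 by (simp add: t_def)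
  have Y0: "0 \<le> YY" using M1_nn M2_nn by simp
  have l0p: "0 < l0" by (simp add: l0_def)
  have l01: "l0 \<le> 1"
  proof -
    have "ln 2 \<le> (2::real) - 1" by (rule ln_le_minus_one) simp
    thus ?thesis by (simp add: l0_def)
  qed
  have lgl0: "l0 \<le> lg" using lg_facts(2) by (simp add: l0_def)
  have p7: "m + 2 \<le> 7" using m5 by simp
  have L7: "l0 ^ 7 \<le> L" unfolding L_def by (rule pow_ge_l0[OF l0p l01 lgl0 p7])
  have l07: "0 < l0 ^ 7" using l0p by simp
  have three: "3 \<le> 3 / l0 ^ 7 * L"
  proof -
    have "3 / l0 ^ 7 * l0 ^ 7 \<le> 3 / l0 ^ 7 * L" using L7 l07 by (intro mult_left_mono) auto
    thus ?thesis using l07 by simp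
  qed
  have A0: "0 \<le> G * t * YY" using G0 t1 Y0 by simp
  have core: "12 * (G * YY * t) * (cJ \<theta> * L) + (2 + t) * (G * YY) \<le> (cC \<theta> B2) * L * YY"
  proof -
    have "(2 + t) * (G * YY) \<le> (3 * t) * (G * YY)" using t1 G0 Y0 by (intro mult_right_mono) auto
    also have "\<dots> = G * t * YY * 3" by (simp add: mult_ac)
    also have "\<dots> \<le> G * t * YY * (3 / l0 ^ 7 * L)" using three A0 by (rule mult_left_mono)
    finally have a: "(2 + t) * (G * YY) \<le> G * t * YY * (3 / l0 ^ 7 * L)" .
    have "12 * (G * YY * t) * (cJ \<theta> * L) + (2 + t) * (G * YY) \<le> 12 * (G * YY * t) * (cJ \<theta> * L) + G * t * YY * (3 / l0 ^ 7 * L)"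
      using a by simp
    also have "\<dots> = (G * t * (12 * cJ \<theta> + 3 / l0 ^ 7)) * L * YY" by (simp add: algebra_simps)
    also have "\<dots> \<le> (G * t * (12 * cJ \<theta> + 3 / l0 ^ 7) + 1) * L * YY"
      using lg_pos Y0 by (intro mult_right_mono) (auto simp: L_def)
    also have "G * t * (12 * cJ \<theta> + 3 / l0 ^ 7) + 1 = cC \<theta> B2" by (simp add: cC_def G_def t_def l0_def)
    finally show ?thesis .
  qed
  have "4 * EE * QJ / K + 1 / K * (2 * (cG \<theta> B2 * YY) + (4 * EE * QJ + (4 * EE * QJ + (1 + 1 / \<theta>) * (cG \<theta> B2 * YY))))
      = 1 / K * (12 * (G * YY * t) * (cJ \<theta> * L) + (2 + t) * (G * YY))"
    by (simp add: G_def t_def L_def algebra_simps add_divide_distrib)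
  also have "\<dots> \<le> 1 / K * ((cC \<theta> B2) * L * YY)" using core K1 by (intro mult_left_mono) auto
  also have "\<dots> = cC \<theta> B2 / K * lg ^ (m + 2) * YY" by (simp add: L_def)
  finally show ?thesis .
qed

lemma main_bound:
  "Znorm b \<theta> k y0 eps m uu \<le> ereal (cC \<theta> B2 / K * lg ^ (m + 2)) * Ynorm b \<theta> k y0 eps m f"
proof -
  let ?S = "{(g, h). \<forall>y\<in>{0..1}. dI uu y = g y * Ln (den b y0 eps y) + h y}"
  let ?Phi = "\<lambda>gh. Ynorm b \<theta> k y0 eps m (fst gh) + Ynorm b \<theta> k y0 eps (m + 1) (snd gh)"
  have mem: "(gg, hh) \<in> ?S" by simp
  have inf: "(INF gh \<in> ?S. ?Phi gh) \<le> ereal (2 * (cG \<theta> B2 * YY)) + ereal (4 * EE * QJ + (4 * EE * QJ + (1 + 1 / \<theta>) * (cG \<theta> B2 * YY)))"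
    apply (rule INF_lower2[OF mem])
    apply (simp only: fst_conv snd_conv)
    by (rule add_mono[OF Yg_bound Yh_bound])
  have su: "supnorm uu \<le> ereal (4 * EE * QJ / K)" by (rule supnorm_least) (rule u_bound)
  have k0: "0 \<le> ereal (1 / K)" using K1 by simp
  have "Znorm b \<theta> k y0 eps m uu = supnorm uu + ereal (1 / K) * (INF gh \<in> ?S. ?Phi gh)"
    using u_diff by (simp add: Znorm_def)
  also have "\<dots> \<le> ereal (4 * EE * QJ / K) + ereal (1 / K) * (ereal (2 * (cG \<theta> B2 * YY)) + ereal (4 * EE * QJ + (4 * EE * QJ + (1 + 1 / \<theta>) * (cG \<theta> B2 * YY))))"
    by (rule add_mono[OF su ereal_mult_left_mono[OF inf k0]])
  also have "\<dots> = ereal (4 * EE * QJ / K + 1 / K * (2 * (cG \<theta> B2 * YY) + (4 * EE * QJ + (4 * EE * QJ + (1 + 1 / \<theta>) * (cG \<theta> B2 * YY)))))"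
    by simp
  also have "\<dots> \<le> ereal (cC \<theta> B2 / K * lg ^ (m + 2) * YY)" using final_real by simp
  also have "\<dots> = ereal (cC \<theta> B2 / K * lg ^ (m + 2)) * Ynorm b \<theta> k y0 eps m f"
    by (simp add: Ynorm_eq)
  finally show ?thesis .
qed

end


theorem lemma2p1:
  fixes b :: "real \<Rightarrow> real" and \<theta> :: real
  assumes "0 < \<theta>" and "\<theta> < 1/10"
    and "C4_with_bounds b \<theta>"
  shows "\<exists>C>1. \<forall>(eps::real) (k::int) (y0::real) (m::nat) (f::real \<Rightarrow> complex).
           eps \<in> {-1/4..1/4} \<longrightarrow> eps \<noteq> 0 \<longrightarrow> k \<noteq> 0 \<longrightarrow> y0 \<in> {0..1} \<longrightarrow>
           1 \<le> m \<longrightarrow> m \<le> 5 \<longrightarrow> Ynorm b \<theta> k y0 eps m f < \<infinity> \<longrightarrow>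
           Znorm b \<theta> k y0 eps m (Top b k y0 eps f)
             \<le> ereal (C / \<bar>real_of_int k\<bar> * (ln (jbr (real_of_int k))) ^ (m + 2))
               * Ynorm b \<theta> k y0 eps m f"
proof -
  from assms(3) obtain d :: "nat \<Rightarrow> real \<Rightarrow> real" where
    d0: "\<forall>y\<in>{0..1}. d 0 y = b y" and
    dd: "\<forall>j<4. \<forall>y\<in>{0..1}. (d j has_real_derivative d (Suc j) y) (at y within {0..1})" and
    d1b: "\<forall>y\<in>{0..1}. \<theta> / 100 \<le> \<bar>d 1 y\<bar> \<and> \<bar>d 1 y\<bar> \<le> 1 / (100 * \<theta>)"
    unfolding C4_with_bounds_def by blast
  have d2c: "continuous_on {0..1} (d 2)"
  proof -
    have "(d 2 has_real_derivative d 3 y) (at y within {0..1})" if "y \<in> {0..1}" for y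
    proof -
      have "(2::nat) < 4" by simp
      with dd that have "(d 2 has_real_derivative d (Suc 2) y) (at y within {0..1})" by blast
      thus ?thesis by (simp add: numeral_3_eq_3 numeral_2_eq_2)
    qed
    thus ?thesis
      using DERIV_continuous continuous_on_eq_continuous_within by blast
  qed
  have "bounded (d 2 ` {0..1})" by (rule compact_imp_bounded[OF compact_continuous_image[OF d2c compact_Icc]])
  then obtain B2 where B2: "\<forall>y\<in>{0..1}. \<bar>d 2 y\<bar> \<le> B2" unfolding bounded_iff by auto
  have B2nn: "0 \<le> B2" using B2 by (smt (verit) atLeastAtMost_iff zero_le_one order_refl)
  have th0: "0 < \<theta>" and th1: "\<theta> < 1/10" using assms by auto
  have cG0: "0 < cG \<theta> B2"
    using th0 B2nn by (simp add: cG_def add_pos_nonneg)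
  have cA0: "0 \<le> cA1 \<theta>"
  proof -
    have "0 \<le> ln (1 / (100 * \<theta>) + 1)" using th0 by simp
    moreover have "0 \<le> 1 / \<theta>" using th0 by simp
    ultimately show ?thesis unfolding cA1_def using pi_gt3 by simp
  qed
  have cJ0: "0 \<le> cJ \<theta>"
  proof -
    have b: "0 \<le> 1 + 2 / ln (2::real)" by (simp add: add_nonneg_nonneg)
    have c: "0 \<le> (2::real) ^ 8 + 4 * pi * 14 ^ 7" by (simp add: add_nonneg_nonneg)
    show ?thesis unfolding cJ_def using cA0 b c by (intro mult_nonneg_nonneg zero_le_power) auto
  qed
  have C1: "1 < cC \<theta> B2"
  proof -
    have "0 < 3 / (ln 2 / 2 :: real) ^ 7" by simp
    hence "0 < 12 * cJ \<theta> + 3 / (ln 2 / 2) ^ 7" using cJ0 by linarith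
    moreover have "0 < 1 + 1 / \<theta>" using th0 by (simp add: add_pos_pos)
    ultimately have "0 < cG \<theta> B2 * (1 + 1 / \<theta>) * (12 * cJ \<theta> + 3 / (ln 2 / 2) ^ 7)"
      using cG0 by simp
    thus ?thesis by (simp add: cC_def)
  qed
  show ?thesis
  proof (intro exI[of _ "cC \<theta> B2"] conjI allI impI)
    show "1 < cC \<theta> B2" by (rule C1)
  next
    fix eps :: real and k :: int and y0 :: real and m :: nat and f :: "real \<Rightarrow> complex"
    assume h: "eps \<in> {-1/4..1/4}" "eps \<noteq> 0" "k \<noteq> 0" "y0 \<in> {0..1}" "1 \<le> m" "m \<le> 5"
      "Ynorm b \<theta> k y0 eps m f < \<infinity>"
    interpret S1 b \<theta> d B2 eps k y0 m f
      by unfold_locales (use th0 th1 d0 dd d1b B2 h in auto)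
    show "Znorm b \<theta> k y0 eps m (Top b k y0 eps f)
             \<le> ereal (cC \<theta> B2 / \<bar>real_of_int k\<bar> * (ln (jbr (real_of_int k))) ^ (m + 2))
               * Ynorm b \<theta> k y0 eps m f"
      by (rule main_bound)
  qed
qed


end
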